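(* Let $T$ be a tree of diameter $d$ on $n$ vertices with maximum Wiener index. Let $x$ be a special vertex of $T$ and let $T_1,T_2$ be components of $T-x$ such that each of them contains exactly one broom vertex of $T$ and $d(y,y')<d$ for all leaves $y\in V(T_1)$, $y'\in V(T_2)$. Let $y_1\in V(T_1)$, $y_2\in V(T_2)$ be leaves of $T$, $y_1'$ the broom vertex adjacent to $y_1$, $p=d(x,y_1)=d(x,y_2)$, and $t_i$ the number of leaves of $T$ in $T_i$ ($i\in\{1,2\}$). Let $T'=T_2\xrightarrow{T} y_1'$. If $t_1=t_2+1$, then $W(T)\geq W(T')$ if and only if $$t_1\geq \sqrt{\frac{p(3n+2p-7)+3}{12}}-p+\frac32.$$
   Context: All graphs are finite and simple; $d(u,v)$ denotes distance and $W(G)=\sum_{\{u,v\}\subseteq V(G)} d(u,v)$ is the Wiener index. A tree $T$ of order $n$ and diameter $d$ has maximum Wiener index if $W(T')\leq W(T)$ for every tree $T'$ of order $n$ and diameter $d$. A leaf is a vertex of degree $1$; a broom vertex of $T$ is a vertex adjacent to a leaf of $T$. A vertex $x$ of a tree $T$ of diameter $d$ is special if $\deg(x)\geq 3$ and there exist components $T_1,T_2$ of $T-x$ such that each contains exactly one broom vertex of $T$ and $d(y,y')<d$ for all leaves $y\in V(T_1)$, $y'\in V(T_2)$. For such $x,T_1,T_2$ and the broom vertex $y_1'$ of $T_1$, the tree $T_2\xrightarrow{T} y_1'$ is obtained from $T$ by deleting all vertices of $T_2$ and attaching $|V(T_2)|$ new leaves to $y_1'$. *)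

theory Defs
  imports Complex_Main
begin

definition simple_graph :: "'a set \<Rightarrow> ('a \<Rightarrow> 'a \<Rightarrow> bool) \<Rightarrow> bool" where
  "simple_graph V E \<longleftrightarrow> finite V \<and> (\<forall>u v. E u v \<longrightarrow> u \<in> V \<and> v \<in> V \<and> u \<noteq> v)
     \<and> (\<forall>u v. E u v \<longrightarrow> E v u)"

definition walk :: "'a set \<Rightarrow> ('a \<Rightarrow> 'a \<Rightarrow> bool) \<Rightarrow> 'a list \<Rightarrow> bool" where
  "walk V E xs \<longleftrightarrow> xs \<noteq> [] \<and> set xs \<subseteq> V \<and> successively E xs"

definition connected_graph :: "'a set \<Rightarrow> ('a \<Rightarrow> 'a \<Rightarrow> bool) \<Rightarrow> bool" where
  "connected_graph V E \<longleftrightarrow>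
     (\<forall>u\<in>V. \<forall>v\<in>V. \<exists>xs. walk V E xs \<and> hd xs = u \<and> last xs = v)"

definition is_cycle :: "'a set \<Rightarrow> ('a \<Rightarrow> 'a \<Rightarrow> bool) \<Rightarrow> 'a list \<Rightarrow> bool" where
  "is_cycle V E xs \<longleftrightarrow> walk V E xs \<and> length xs \<ge> 3 \<and> distinct xs \<and> E (last xs) (hd xs)"

definition acyclic_graph :: "'a set \<Rightarrow> ('a \<Rightarrow> 'a \<Rightarrow> bool) \<Rightarrow> bool" where
  "acyclic_graph V E \<longleftrightarrow> \<not> (\<exists>xs. is_cycle V E xs)"

definition tree :: "'a set \<Rightarrow> ('a \<Rightarrow> 'a \<Rightarrow> bool) \<Rightarrow> bool" where
  "tree V E \<longleftrightarrow> simple_graph V E \<and> V \<noteq> {} \<and> connected_graph V E \<and> acyclic_graph V E"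

definition dist :: "'a set \<Rightarrow> ('a \<Rightarrow> 'a \<Rightarrow> bool) \<Rightarrow> 'a \<Rightarrow> 'a \<Rightarrow> nat" where
  "dist V E u v = (LEAST k. \<exists>xs. walk V E xs \<and> hd xs = u \<and> last xs = v \<and> length xs = Suc k)"

definition wiener :: "'a set \<Rightarrow> ('a \<Rightarrow> 'a \<Rightarrow> bool) \<Rightarrow> nat" where
  "wiener V E = (\<Sum>u\<in>V. \<Sum>v\<in>V. dist V E u v) div 2"

definition diameter :: "'a set \<Rightarrow> ('a \<Rightarrow> 'a \<Rightarrow> bool) \<Rightarrow> nat" where
  "diameter V E = Max {dist V E u v | u v. u \<in> V \<and> v \<in> V}"

definition degree :: "'a set \<Rightarrow> ('a \<Rightarrow> 'a \<Rightarrow> bool) \<Rightarrow> 'a \<Rightarrow> nat" where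
  "degree V E u = card {v \<in> V. E u v}"

definition leaf :: "'a set \<Rightarrow> ('a \<Rightarrow> 'a \<Rightarrow> bool) \<Rightarrow> 'a \<Rightarrow> bool" where
  "leaf V E u \<longleftrightarrow> u \<in> V \<and> degree V E u = 1"

definition broom_vertex :: "'a set \<Rightarrow> ('a \<Rightarrow> 'a \<Rightarrow> bool) \<Rightarrow> 'a \<Rightarrow> bool" where
  "broom_vertex V E u \<longleftrightarrow> u \<in> V \<and> (\<exists>y. leaf V E y \<and> E u y)"

text \<open>Tree of order n and diameter d with maximum Wiener index (compared with all trees
of the same order and diameter; vertex sets taken in the same type, which loses nothing
since the Wiener index and diameter are isomorphism invariants).\<close>
definition max_wiener_tree :: "'a set \<Rightarrow> ('a \<Rightarrow> 'a \<Rightarrow> bool) \<Rightarrow> bool" where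
  "max_wiener_tree V E \<longleftrightarrow> tree V E \<and>
     (\<forall>(V' :: 'a set) (E' :: 'a \<Rightarrow> 'a \<Rightarrow> bool). tree V' E' \<and> card V' = card V \<and> diameter V' E' = diameter V E
        \<longrightarrow> wiener V' E' \<le> wiener V E)"

definition del_V :: "'a set \<Rightarrow> 'a \<Rightarrow> 'a set" where
  "del_V V x = V - {x}"

definition del_E :: "('a \<Rightarrow> 'a \<Rightarrow> bool) \<Rightarrow> 'a \<Rightarrow> 'a \<Rightarrow> 'a \<Rightarrow> bool" where
  "del_E E x = (\<lambda>u v. E u v \<and> u \<noteq> x \<and> v \<noteq> x)"

definition component :: "'a set \<Rightarrow> ('a \<Rightarrow> 'a \<Rightarrow> bool) \<Rightarrow> 'a set \<Rightarrow> bool" where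
  "component V E C \<longleftrightarrow> C \<noteq> {} \<and> C \<subseteq> V \<and>
     (\<forall>u\<in>C. \<forall>v\<in>C. \<exists>xs. walk C E xs \<and> hd xs = u \<and> last xs = v) \<and>
     (\<forall>u\<in>C. \<forall>v\<in>V. E u v \<longrightarrow> v \<in> C)"

definition special_pair :: "'a set \<Rightarrow> ('a \<Rightarrow> 'a \<Rightarrow> bool) \<Rightarrow> 'a \<Rightarrow> 'a set \<Rightarrow> 'a set \<Rightarrow> bool" where
  "special_pair V E x T1 T2 \<longleftrightarrow>
     component (del_V V x) (del_E E x) T1 \<and> component (del_V V x) (del_E E x) T2 \<and>
     card {b \<in> T1. broom_vertex V E b} = 1 \<and> card {b \<in> T2. broom_vertex V E b} = 1 \<and>
     (\<forall>y\<in>T1. \<forall>y'\<in>T2. leaf V E y \<and> leaf V E y' \<longrightarrow> dist V E y y' < diameter V E)"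

definition special_vertex :: "'a set \<Rightarrow> ('a \<Rightarrow> 'a \<Rightarrow> bool) \<Rightarrow> 'a \<Rightarrow> bool" where
  "special_vertex V E x \<longleftrightarrow> x \<in> V \<and> degree V E x \<ge> 3 \<and>
     (\<exists>T1 T2. T1 \<noteq> T2 \<and> special_pair V E x T1 T2)"

text \<open>The tree T2 -> y1' (relative to T): delete the vertices of T2 and attach card T2
new leaves (Inr 0, ..., Inr (card T2 - 1)) to y1'. Old vertices are tagged Inl.\<close>
definition move_V :: "'a set \<Rightarrow> 'a set \<Rightarrow> ('a + nat) set" where
  "move_V V T2 = Inl ` (V - T2) \<union> Inr ` {..<card T2}"

definition move_E :: "('a \<Rightarrow> 'a \<Rightarrow> bool) \<Rightarrow> 'a set \<Rightarrow> 'a \<Rightarrow> ('a + nat) \<Rightarrow> ('a + nat) \<Rightarrow> bool" where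
  "move_E E T2 y = (\<lambda>a b. case (a, b) of
       (Inl u, Inl v) \<Rightarrow> E u v \<and> u \<notin> T2 \<and> v \<notin> T2
     | (Inl u, Inr i) \<Rightarrow> u = y \<and> i < card T2
     | (Inr i, Inl u) \<Rightarrow> u = y \<and> i < card T2
     | (Inr i, Inr j) \<Rightarrow> False)"

end

theory Submission
  imports Defs
begin

lemma walk_len: "walk V E xs \<Longrightarrow> length xs = Suc (length xs - 1)"
  by (cases xs) (auto simp: walk_def)

lemma dist_le_walk: "walk V E xs \<Longrightarrow> dist V E (hd xs) (last xs) \<le> length xs - 1"
  unfolding dist_def by (rule Least_le) (use walk_len in blast)

lemma dist_eqI:
  assumes "walk V E xs" "hd xs = u" "last xs = v" "length xs = Suc m"
    and "\<And>ys. walk V E ys \<Longrightarrow> hd ys = u \<Longrightarrow> last ys = v \<Longrightarrow> m \<le> length ys - 1"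
  shows "dist V E u v = m"
  unfolding dist_def
proof (rule Least_equality)
  show "\<exists>xs. walk V E xs \<and> hd xs = u \<and> last xs = v \<and> length xs = Suc m" using assms by blast
next
  fix k assume "\<exists>xs. walk V E xs \<and> hd xs = u \<and> last xs = v \<and> length xs = Suc k"
  then obtain ys where "walk V E ys" "hd ys = u" "last ys = v" "length ys = Suc k" by blast
  with assms(5)[of ys] show "m \<le> k" by simp
qed

lemma potential:
  assumes "successively E xs" "xs \<noteq> []" "\<And>a b. E a b \<Longrightarrow> f b \<le> f a + (1::nat)"
  shows "f (last xs) \<le> f (hd xs) + (length xs - 1)"
  using assms(1,2)
proof (induction xs)
  case Nil then show ?case by simp
next
  case (Cons a xs)
  show ?case
  proof (cases xs)
    case Nil then show ?thesis by simp
  next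
    case (Cons b ys)
    with Cons.prems have "E a b" "successively E xs" by auto
    with Cons.IH Cons have "f (last xs) \<le> f b + (length xs - 1)" by auto
    with assms(3)[OF \<open>E a b\<close>] Cons show ?thesis by auto
  qed
qed

lemma potential_walk:
  assumes "walk V E xs" "\<And>a b. E a b \<Longrightarrow> f b \<le> f a + (1::nat)"
  shows "f (last xs) \<le> f (hd xs) + (length xs - 1)"
  using potential[of E xs f] assms by (auto simp: walk_def)

locale sg = fixes V :: "'a set" and E :: "'a \<Rightarrow> 'a \<Rightarrow> bool" assumes sg: "simple_graph V E"
begin
lemma finV: "finite V" using sg by (simp add: simple_graph_def)
lemma E_V: "E u v \<Longrightarrow> u \<in> V" "E u v \<Longrightarrow> v \<in> V" using sg by (auto simp: simple_graph_def)
lemma E_sym: "E u v \<Longrightarrow> E v u" using sg by (auto simp: simple_graph_def)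
lemma E_irr: "E u v \<Longrightarrow> u \<noteq> v" using sg by (auto simp: simple_graph_def)

lemma walk_rev: "walk V E xs \<Longrightarrow> walk V E (rev xs)"
  unfolding walk_def by (auto intro: successively_mono E_sym)

lemma walk_append: "walk V E xs \<Longrightarrow> walk V E ys \<Longrightarrow> last xs = hd ys \<Longrightarrow> walk V E (xs @ tl ys)"
  unfolding walk_def
  by (cases ys) (auto simp: successively_append_iff successively_Cons)

end

locale ctree = sg + assumes conn: "connected_graph V E" and acyc: "acyclic_graph V E"
begin

lemma dist_ex: "u \<in> V \<Longrightarrow> v \<in> V \<Longrightarrow>
   \<exists>xs. walk V E xs \<and> hd xs = u \<and> last xs = v \<and> length xs = Suc (dist V E u v)"
proof -
  assume uv: "u \<in> V" "v \<in> V"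
  obtain xs where xs: "walk V E xs" "hd xs = u" "last xs = v"
    using conn uv unfolding connected_graph_def by blast
  have "\<exists>k. \<exists>xs. walk V E xs \<and> hd xs = u \<and> last xs = v \<and> length xs = Suc k"
    by (intro exI[of _ "length xs - 1"] exI[of _ xs]) (use xs walk_len[OF xs(1)] in auto)
  then show ?thesis unfolding dist_def by (rule LeastI_ex)
qed

lemma dist_sym: "u \<in> V \<Longrightarrow> v \<in> V \<Longrightarrow> dist V E u v = dist V E v u"
proof -
  have *: "dist V E u v \<le> dist V E v u" if uV: "u \<in> V" and vV: "v \<in> V" for u v
  proof -
    obtain xs where "walk V E xs" "hd xs = v" "last xs = u" "length xs = Suc (dist V E v u)"
      using dist_ex[OF vV uV] by blast
    then show ?thesis using dist_le_walk[OF walk_rev[of xs]]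
      by (simp add: hd_rev last_rev)
  qed
  assume "u \<in> V" "v \<in> V" then show ?thesis using * by (meson le_antisym)
qed

lemma dist_self: "u \<in> V \<Longrightarrow> dist V E u u = 0"
  using dist_le_walk[of V E "[u]"] by (auto simp: walk_def)

lemma shortest_distinct:
  assumes "walk V E xs" "length xs = Suc (dist V E (hd xs) (last xs))"
  shows "distinct xs"
proof (rule ccontr)
  assume "\<not> distinct xs"
  then obtain as bs cs c where xs: "xs = as @ [c] @ bs @ [c] @ cs" using not_distinct_decomp by blast
  let ?ys = "as @ [c] @ cs"
  have "walk V E ?ys" using assms(1) unfolding xs walk_def
    by (auto simp: successively_append_iff successively_Cons)
  moreover have "hd ?ys = hd xs" unfolding xs by (cases as) auto
  moreover have "last ?ys = last xs" unfolding xs by (cases cs) auto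
  ultimately have "dist V E (hd xs) (last xs) \<le> length ?ys - 1" using dist_le_walk[of V E ?ys] by simp
  then show False using assms(2) unfolding xs by simp
qed

lemma dist_tri: "u \<in> V \<Longrightarrow> v \<in> V \<Longrightarrow> w \<in> V \<Longrightarrow> dist V E u w \<le> dist V E u v + dist V E v w"
proof -
  assume a: "u \<in> V" "v \<in> V" "w \<in> V"
  obtain xs where xs: "walk V E xs" "hd xs = u" "last xs = v" "length xs = Suc (dist V E u v)"
    using dist_ex a by blast
  obtain ys where ys: "walk V E ys" "hd ys = v" "last ys = w" "length ys = Suc (dist V E v w)"
    using dist_ex a by blast
  have "walk V E (xs @ tl ys)" using walk_append xs ys by auto
  moreover have "hd (xs @ tl ys) = u" using xs by (cases xs) auto
  moreover have "last (xs @ tl ys) = w" using xs ys by (cases ys) auto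
  ultimately show ?thesis using dist_le_walk[of V E "xs @ tl ys"] xs ys by auto
qed


lemma path_unique:
  "walk V E xs \<Longrightarrow> walk V E ys \<Longrightarrow> distinct xs \<Longrightarrow> distinct ys \<Longrightarrow>
   hd xs = hd ys \<Longrightarrow> last xs = last ys \<Longrightarrow> xs = ys"
proof (induction xs arbitrary: ys)
  case Nil then show ?case by (simp add: walk_def)
next
  case (Cons a xs')
  obtain ys' where ys: "ys = a # ys'" using Cons.prems by (cases ys) (auto simp: walk_def)
  show ?case
  proof (cases "xs' = []")
    case True
    then have "last ys = a" using Cons.prems by simp
    have "ys' = []"
    proof (rule ccontr)
      assume "ys' \<noteq> []"
      then have "last ys' = a" "last ys' \<in> set ys'" using \<open>last ys = a\<close> ys by auto
      then show False using Cons.prems(4) ys by auto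
    qed
    then show ?thesis using True ys by simp
  next
    case xs'ne: False
    have ys'ne: "ys' \<noteq> []"
    proof
      assume "ys' = []"
      then have "last xs' = a" using Cons.prems ys xs'ne by simp
      then show False using Cons.prems(3) xs'ne by (metis distinct.simps(2) last_in_set)
    qed
    have wx: "walk V E xs'" using Cons.prems(1) xs'ne by (auto simp: walk_def successively_Cons)
    have wy: "walk V E ys'" using Cons.prems(2) ys ys'ne by (auto simp: walk_def successively_Cons)
    show ?thesis
    proof (cases "hd xs' = hd ys'")
      case True
      have "xs' = ys'"
        using Cons.IH[OF wx wy] Cons.prems ys xs'ne ys'ne True by auto
      then show ?thesis using ys by simp
    next
      case False
      have "\<exists>z\<in>set xs'. z \<in> set ys'" using xs'ne ys'ne Cons.prems(6) ys
        by (metis last.simps last_in_set)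
      then obtain us z ws where xs'eq: "xs' = us @ z # ws" and zin: "z \<in> set ys'"
        and usn: "\<forall>u\<in>set us. u \<notin> set ys'"
        using split_list_first_prop[of xs' "\<lambda>z. z \<in> set ys'"] by blast
      obtain vs ws' where ys'eq: "ys' = vs @ z # ws'" using zin split_list by metis
      let ?c = "a # us @ z # rev vs"
      have Ea1: "E a (hd xs')" using Cons.prems(1) xs'ne by (auto simp: walk_def successively_Cons)
      have Ea2: "E a (hd ys')" using Cons.prems(2) ys ys'ne by (auto simp: walk_def successively_Cons)
      have s1: "successively E (us @ [z])" using wx unfolding xs'eq walk_def
        by (auto simp: successively_append_iff successively_Cons)
      have s2: "successively E (vs @ [z])" using wy unfolding ys'eq walk_def
        by (auto simp: successively_append_iff successively_Cons)
      have s2': "successively E (z # rev vs)"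
      proof -
        have "successively (\<lambda>x y. E y x) (vs @ [z])" using s2 by (auto intro: successively_mono E_sym)
        then have "successively E (rev (vs @ [z]))" by (rule successively_rev[THEN iffD2])
        moreover have "rev (vs @ [z]) = z # rev vs" by simp
        ultimately show ?thesis by metis
      qed
      have "successively E (us @ z # rev vs)"
        using s1 s2' by (auto simp: successively_append_iff successively_Cons)
      moreover have "E a (hd (us @ z # rev vs))" using Ea1 xs'eq by (cases us) auto
      ultimately have sc: "successively E ?c" by (simp add: successively_Cons)
      have setc: "set ?c \<subseteq> V" using Cons.prems(1,2) ys xs'eq ys'eq by (auto simp: walk_def)
      have dc: "distinct ?c" using Cons.prems(3,4) ys xs'eq ys'eq usn by auto
      have lc: "length ?c \<ge> 3"
      proof (rule ccontr)
        assume "\<not> length ?c \<ge> 3"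
        then have "us = []" "vs = []" by (cases us; cases vs; simp)+
        then show False using False xs'eq ys'eq by simp
      qed
      have "E (last ?c) (hd ?c)"
      proof (cases vs)
        case Nil then have "z = hd ys'" using ys'eq by simp
        then show ?thesis using Nil E_sym[OF Ea2] by simp
      next
        case (Cons v vs2) then have "last ?c = hd ys'" using ys'eq by (simp add: last_rev)
        then show ?thesis using E_sym[OF Ea2] by simp
      qed
      then have "is_cycle V E ?c" using sc setc dc lc by (simp add: is_cycle_def walk_def)
      then show ?thesis using acyc by (auto simp: acyclic_graph_def)
    qed
  qed
qed

lemma path_dist:
  assumes "walk V E xs" "distinct xs"
  shows "dist V E (hd xs) (last xs) = length xs - 1"
proof -
  have "hd xs \<in> V" "last xs \<in> V" using assms(1) by (auto simp: walk_def)
  then obtain ys where ys: "walk V E ys" "hd ys = hd xs" "last ys = last xs"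
    "length ys = Suc (dist V E (hd xs) (last xs))" using dist_ex by blast
  then have "distinct ys" using shortest_distinct by simp
  then have "ys = xs" using path_unique ys assms by metis
  then show ?thesis using ys by simp
qed


lemma leaf_nb: "leaf V E l \<Longrightarrow> \<exists>c. {v\<in>V. E l v} = {c}"
proof -
  assume "leaf V E l"
  then have "card {v\<in>V. E l v} = 1" by (simp add: leaf_def degree_def)
  then obtain c where "{v\<in>V. E l v} = {c}" by (rule card_1_singletonE)
  then show ?thesis by (rule exI)
qed

lemma leaf_nb_eq: "leaf V E l \<Longrightarrow> E l c \<Longrightarrow> E l c' \<Longrightarrow> c = c'"
proof -
  assume a: "leaf V E l" "E l c" "E l c'"
  obtain c0 where c0: "{v\<in>V. E l v} = {c0}" using leaf_nb[OF a(1)] by (elim exE)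
  have "c \<in> {v\<in>V. E l v}" "c' \<in> {v\<in>V. E l v}" using a E_V by simp_all
  then show ?thesis unfolding c0 by simp
qed

lemma two_nb_not_leaf: "E l c \<Longrightarrow> E l c' \<Longrightarrow> c \<noteq> c' \<Longrightarrow> \<not> leaf V E l"
  using leaf_nb_eq by metis

lemma extend_leaf:
  assumes "walk V E P" "distinct P" "length P \<ge> 2"
  shows "\<exists>ys zs. walk V E ys \<and> distinct ys \<and> ys = P @ zs \<and> leaf V E (last ys) \<and>
     E (last ys) (ys ! (length ys - 2))"
proof -
  let ?S = "{ys. walk V E ys \<and> distinct ys \<and> (\<exists>zs. ys = P @ zs)}"
  have fin: "finite ?S"
    by (rule finite_subset[OF _ finite_subset_distinct[OF finV]]) (auto simp: walk_def)
  have "P \<in> ?S" using assms by auto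
  then have ne: "length ` ?S \<noteq> {}" by blast
  let ?m = "Max (length ` ?S)"
  have "?m \<in> length ` ?S" by (rule Max_in[OF finite_imageI[OF fin] ne])
  then obtain ys where ysm: "?m = length ys" and ys1: "ys \<in> ?S" by (rule imageE)
  have ys: "ys \<in> ?S" "length ys = ?m" using ysm ys1 by simp_all
  have maxl: "length ws \<le> length ys" if "ws \<in> ?S" for ws
    using Max_ge[OF finite_imageI[OF fin]] that ys(2) by auto
  obtain zs where yz: "ys = P @ zs" using ys by auto
  have wy: "walk V E ys" "distinct ys" using ys by auto
  have ly: "length ys \<ge> 2" using yz assms by simp
  let ?l = "last ys" and ?c = "ys ! (length ys - 2)"
  have yne: "ys \<noteq> []" using ly by auto
  have lastn: "?l = ys ! (length ys - 1)" using last_conv_nth[OF yne] by simp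
  have sl: "Suc (length ys - 2) = length ys - 1" "Suc (length ys - 2) < length ys" using ly by auto
  have Ecl: "E ?c ?l"
    using successively_nth[of E ys "length ys - 2"] wy lastn sl by (simp add: walk_def)
  have nb: "z = ?c" if "E ?l z" for z
  proof -
    have zin: "z \<in> set ys"
    proof (rule ccontr)
      assume "z \<notin> set ys"
      then have "walk V E (ys @ [z])" "distinct (ys @ [z])" using wy that E_V yne
        by (auto simp: walk_def successively_append_iff)
      moreover have "ys @ [z] = P @ (zs @ [z])" using yz by simp
      ultimately have "ys @ [z] \<in> ?S" by blast
      then have "length (ys @ [z]) \<le> length ys" by (rule maxl)
      then show False by simp
    qed
    then obtain i where i: "i < length ys" "ys ! i = z" by (auto simp: in_set_conv_nth)
    have "i \<noteq> length ys - 1" using E_irr[OF that] lastn i by auto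
    moreover have "\<not> i < length ys - 2"
    proof
      assume ilt: "i < length ys - 2"
      let ?d = "drop i ys"
      have sd: "successively E ?d"
      proof -
        have "successively E (take i ys @ ?d)" using wy by (simp add: walk_def)
        then show ?thesis unfolding successively_append_iff by (elim conjE)
      qed
      have "set ?d \<subseteq> V" using wy by (meson walk_def set_drop_subset subset_trans)
      moreover have "?d \<noteq> []" using ilt by simp
      moreover note sd
      moreover have "distinct ?d" using wy by simp
      moreover have "length ?d \<ge> 3" using ilt by simp
      moreover have "hd ?d = z" using i by (simp add: hd_drop_conv_nth)
      moreover have "last ?d = ?l" using ilt by simp
      ultimately have "is_cycle V E ?d" using that unfolding is_cycle_def walk_def by simp
      then show False using acyc unfolding acyclic_graph_def by blast
    qed
    ultimately have "i = length ys - 2" using i by linarith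
    then show ?thesis using i by simp
  qed
  have "{v\<in>V. E ?l v} = {?c}"
  proof
    show "{v \<in> V. E ?l v} \<subseteq> {?c}" using nb by blast
    show "{?c} \<subseteq> {v \<in> V. E ?l v}" using E_sym[OF Ecl] E_V(1)[OF Ecl] by simp
  qed
  moreover have "?l \<in> V" using E_V(2)[OF Ecl] .
  ultimately have "leaf V E ?l" by (simp add: leaf_def degree_def)
  then have "walk V E ys \<and> distinct ys \<and> ys = P @ zs \<and> leaf V E (last ys) \<and>
     E (last ys) (ys ! (length ys - 2))" using wy yz E_sym[OF Ecl] by simp
  then show ?thesis by (intro exI)
qed

end

lemma succ_eq_hd:
  "successively (\<lambda>a b. P a = P b) ws \<Longrightarrow> c \<in> set ws \<Longrightarrow> P c = P (hd ws)"
proof (induction ws arbitrary: c)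
  case Nil then show ?case by simp
next
  case (Cons w ws)
  show ?case
  proof (cases "c = w")
    case False
    then have c: "c \<in> set ws" "ws \<noteq> []" using Cons.prems by auto
    have h: "P w = P (hd ws)" "successively (\<lambda>a b. P a = P b) ws"
      using Cons.prems(1) c(2) by (auto simp: successively_Cons)
    show ?thesis using Cons.IH[OF h(2) c(1)] h(1) by simp
  qed simp
qed

lemma succ_eq_same:
  assumes "successively (\<lambda>a b. P a = P b) ws" "a \<in> set ws" "b \<in> set ws"
  shows "P a = P b"
  using succ_eq_hd[OF assms(1,2)] succ_eq_hd[OF assms(1,3)] by simp

lemma len1: "length xs = Suc 0 \<Longrightarrow> xs = [hd xs]" by (cases xs) auto

lemma walk_len2: "walk V E xs \<Longrightarrow> \<not> length xs \<ge> 2 \<Longrightarrow> xs = [hd xs]"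
proof -
  assume "walk V E xs" "\<not> length xs \<ge> 2"
  then have "length xs \<noteq> 0" "length xs < 2" by (auto simp: walk_def)
  then have "length xs = Suc 0" by linarith
  then show ?thesis by (rule len1)
qed

lemma succ_tl: "successively R xs \<Longrightarrow> successively R (tl xs)"
proof (cases xs)
  case (Cons a l) then show "successively R xs \<Longrightarrow> successively R (tl xs)"
    by (cases l) (simp_all add: successively_Cons)
qed simp

lemma walk_tl: "walk V E xs \<Longrightarrow> tl xs \<noteq> [] \<Longrightarrow> walk V E (tl xs)"
  unfolding walk_def using succ_tl[of E xs] by (cases xs) auto

lemma last_tl: "length xs \<ge> 2 \<Longrightarrow> last xs \<in> set (tl xs)"
  by (cases xs) (auto simp: Suc_le_eq)

locale comp_setting = ctree + fixes x C
  assumes xV: "x \<in> V" and comp: "component (del_V V x) (del_E E x) C"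
begin

lemma C_sub: "C \<subseteq> V" "x \<notin> C" "C \<noteq> {}"
  using comp by (auto simp: component_def del_V_def)

lemma C_closed: "u \<in> C \<Longrightarrow> E u v \<Longrightarrow> v \<noteq> x \<Longrightarrow> v \<in> C"
proof -
  assume a: "u \<in> C" "E u v" "v \<noteq> x"
  have "u \<noteq> x" using a(1) C_sub by blast
  then have "del_E E x u v" "v \<in> del_V V x" using a E_V by (simp_all add: del_E_def del_V_def)
  then show "v \<in> C" using comp a(1) unfolding component_def by blast
qed

lemma C_conn: "u \<in> C \<Longrightarrow> v \<in> C \<Longrightarrow> \<exists>ws. walk C E ws \<and> hd ws = u \<and> last ws = v"
proof -
  assume "u \<in> C" "v \<in> C"
  then obtain ws where ws: "walk C (del_E E x) ws" "hd ws = u" "last ws = v"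
    using comp unfolding component_def by blast
  have "walk C E ws" using ws(1) unfolding walk_def del_E_def
    by (auto intro: successively_mono)
  then show ?thesis using ws by blast
qed

lemma walk_C:
  assumes "successively E ws" "set ws \<subseteq> V" "x \<notin> set ws" "a \<in> set ws" "b \<in> set ws"
  shows "a \<in> C \<longleftrightarrow> b \<in> C"
proof -
  have "successively (\<lambda>a b. (a \<in> C) = (b \<in> C)) ws"
  proof (rule successively_mono[OF assms(1)])
    fix u v assume uv: "u \<in> set ws" "v \<in> set ws" "E u v"
    then have "u \<noteq> x" "v \<noteq> x" using assms(3) by auto
    then show "(u \<in> C) = (v \<in> C)" using C_closed uv(3) E_sym[OF uv(3)] by blast
  qed
  then show ?thesis using succ_eq_same[of "\<lambda>v. v \<in> C"] assms(4,5) by blast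
qed

lemma cut_dist:
  assumes "v \<in> C" "w \<in> V" "w \<notin> C"
  shows "dist V E v w = dist V E v x + dist V E x w"
proof (rule antisym)
  show "dist V E v w \<le> dist V E v x + dist V E x w"
    using dist_tri assms C_sub xV by blast
next
  have vV: "v \<in> V" using assms C_sub by blast
  obtain xs where xs: "walk V E xs" "hd xs = v" "last xs = w" "length xs = Suc (dist V E v w)"
    using dist_ex[OF vV assms(2)] by blast
  have "x \<in> set xs"
  proof (rule ccontr)
    assume "x \<notin> set xs"
    moreover have "v \<in> set xs" "w \<in> set xs" using xs hd_in_set last_in_set walk_def by metis+
    ultimately have "v \<in> C \<longleftrightarrow> w \<in> C"
      using walk_C[of xs v w] xs by (simp add: walk_def)
    then show False using assms by simp
  qed
  then obtain as bs where sp: "xs = as @ x # bs" by (meson split_list)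
  have w1: "walk V E (as @ [x])" using xs(1) unfolding sp walk_def
    by (simp add: successively_append_iff successively_Cons)
  have w2: "walk V E (x # bs)" using xs(1) unfolding sp walk_def
    by (simp add: successively_append_iff)
  have "hd (as @ [x]) = v" using xs(2) sp by (cases as) simp_all
  then have d1: "dist V E v x \<le> length as" using dist_le_walk[OF w1] by simp
  have "last (x # bs) = w" using xs(3) sp by (cases bs) simp_all
  then have d2: "dist V E x w \<le> length bs" using dist_le_walk[OF w2] by simp
  show "dist V E v x + dist V E x w \<le> dist V E v w" using d1 d2 xs(4) sp by simp
qed

end


locale broom_setting = comp_setting + fixes y0
  assumes xnl: "\<not> leaf V E x" and one: "card {b\<in>C. broom_vertex V E b} = 1"
    and y0C: "y0 \<in> C" and y0l: "leaf V E y0"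
begin

definition bb where "bb = (THE b. {b\<in>C. broom_vertex V E b} = {b})"

lemma bb: "{b\<in>C. broom_vertex V E b} = {bb}"
proof -
  obtain b where b: "{b\<in>C. broom_vertex V E b} = {b}" using one by (rule card_1_singletonE)
  then have "bb = b" unfolding bb_def by simp
  then show ?thesis using b by simp
qed

lemma bbC: "bb \<in> C" and bb_broom: "broom_vertex V E bb" using bb by auto

lemma bb_unique: "b \<in> C \<Longrightarrow> broom_vertex V E b \<Longrightarrow> b = bb" using bb by blast

lemma leaf_adj: assumes lC: "l \<in> C" and ll: "leaf V E l" shows "E l bb"
proof -
  obtain c where c: "{v\<in>V. E l v} = {c}" using leaf_nb[OF ll] by blast
  have Elc: "E l c" using c by blast
  have cx: "c \<noteq> x"
  proof
    assume cx: "c = x"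
    have Csing: "u = l" if uC: "u \<in> C" for u
    proof -
      obtain ws where ws: "walk C E ws" "hd ws = l" "last ws = u" using C_conn[OF lC uC] by blast
      show "u = l"
      proof (cases "length ws \<ge> 2")
        case True
        then have "E (ws ! 0) (ws ! 1)" using ws(1) successively_nth[of E ws 0] by (simp add: walk_def)
        moreover have "ws \<noteq> []" using True by auto
        then have "ws ! 0 = l" using ws(2) hd_conv_nth[of ws] by simp
        moreover have "ws ! 1 \<in> C" using ws(1) True nth_mem[of 1 ws] by (auto simp: walk_def)
        ultimately have "ws ! 1 = c" using leaf_nb_eq[OF ll, of "ws ! 1" c] Elc by simp
        then show ?thesis using cx \<open>ws ! 1 \<in> C\<close> C_sub by simp
      next
        case False
        then have "ws = [hd ws]" using ws(1) walk_len2 by blast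
        then show ?thesis using ws(2,3) by (metis last.simps)
      qed
    qed
    have "bb = l" using Csing bbC by blast
    then obtain y' where "leaf V E y'" "E l y'" using bb_broom by (auto simp: broom_vertex_def)
    then have "y' = x" using leaf_nb_eq[OF ll] Elc cx by blast
    then show False using xnl \<open>leaf V E y'\<close> by simp
  qed
  have cC: "c \<in> C" using C_closed[OF lC Elc cx] .
  have "broom_vertex V E c" using E_sym[OF Elc] ll E_V(2)[OF Elc] by (auto simp: broom_vertex_def)
  then have "c = bb" using bb_unique cC by blast
  then show ?thesis using Elc by simp
qed

lemma broom:
  "\<exists>P. walk V E P \<and> distinct P \<and> hd P = x \<and> length P \<ge> 2 \<and> last P = bb \<and> set (tl P) \<subseteq> C \<and>
     (\<forall>v\<in>C. v \<in> set (tl P) \<or> leaf V E v) \<and> (\<forall>v\<in>set (tl P). \<not> leaf V E v) \<and> y0 \<notin> set P"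
proof -
  have bV: "bb \<in> V" "bb \<noteq> x" using bbC C_sub by auto
  obtain P where P: "walk V E P" "hd P = x" "last P = bb" "length P = Suc (dist V E x bb)"
    using dist_ex[OF xV bV(1)] by blast
  have dP: "distinct P" using shortest_distinct P by simp
  have lP: "length P \<ge> 2"
  proof (rule ccontr)
    assume "\<not> length P \<ge> 2"
    then have "P = [hd P]" using P(1) walk_len2 by blast
    then have "hd P = last P" by (metis last.simps)
    then show False using P bV by simp
  qed
  have Pne: "P \<noteq> []" using lP by auto
  have xtl: "x \<notin> set (tl P)" using dP P(2) Pne by (cases P) auto
  have tlC: "set (tl P) \<subseteq> C"
  proof
    fix v assume v: "v \<in> set (tl P)"
    have "bb \<in> set (tl P)" using P(3) last_tl[OF lP] by simp
    moreover have "tl P \<noteq> []" using v by auto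
    then have "successively E (tl P)" "set (tl P) \<subseteq> V" using walk_tl[OF P(1)] by (simp_all add: walk_def)
    ultimately show "v \<in> C" using walk_C[of "tl P" v bb] xtl v bbC by blast
  qed
  have S2: "v \<in> set (tl P) \<or> leaf V E v" if vC: "v \<in> C" for v
  proof -
    have vV: "v \<in> V" "v \<noteq> x" using vC C_sub by auto
    obtain Pv where Pv: "walk V E Pv" "hd Pv = x" "last Pv = v" "length Pv = Suc (dist V E x v)"
      using dist_ex[OF xV vV(1)] by blast
    have dPv: "distinct Pv" using shortest_distinct Pv by simp
    have lPv: "length Pv \<ge> 2"
    proof (rule ccontr)
      assume "\<not> length Pv \<ge> 2"
      then have "Pv = [hd Pv]" using Pv(1) walk_len2 by blast
      then have "hd Pv = last Pv" by (metis last.simps)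
      then show False using Pv vV by simp
    qed
    obtain ys zs where ys: "walk V E ys" "distinct ys" "ys = Pv @ zs" "leaf V E (last ys)"
      "E (last ys) (ys ! (length ys - 2))"
      using extend_leaf[OF Pv(1) dPv lPv] by blast
    have ly: "length ys \<ge> 2" using ys(3) lPv by simp
    have hy: "hd ys = x" using ys(3) Pv(2) lPv by (cases Pv) auto
    have vtl: "v \<in> set (tl ys)"
    proof -
      have "v \<in> set (tl Pv)" using Pv(3) last_tl[OF lPv] by simp
      moreover have "tl ys = tl Pv @ zs" using ys(3) lPv by (cases Pv) auto
      ultimately show ?thesis by simp
    qed
    have xtly: "x \<notin> set (tl ys)" using ys(2) hy ly by (cases ys) auto
    have tlne: "tl ys \<noteq> []" using vtl by auto
    have wtl: "walk V E (tl ys)" using walk_tl[OF ys(1) tlne] .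
    have lC: "last ys \<in> C"
      using walk_C[of "tl ys" v "last ys"] wtl xtly vtl last_tl[OF ly] vC by (simp add: walk_def)
    have "E (last ys) bb" using leaf_adj[OF lC ys(4)] .
    then have cb: "ys ! (length ys - 2) = bb" using leaf_nb_eq[OF ys(4) ys(5)] by simp
    let ?B = "butlast ys"
    have yne: "ys \<noteq> []" using ly by auto
    have ysB: "ys = ?B @ [last ys]" using append_butlast_last_id[OF yne] by simp
    have wB: "walk V E ?B"
    proof -
      have "successively E (?B @ [last ys])" using ys(1) ysB by (metis walk_def)
      then have "successively E ?B" by (simp add: successively_append_iff)
      moreover have "?B \<noteq> []" using ly by (cases ys) (auto simp: Suc_le_eq)
      moreover have "set ?B \<subseteq> V" using ys(1) by (meson walk_def in_set_butlastD subset_iff)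
      ultimately show ?thesis by (simp add: walk_def)
    qed
    have dB: "distinct ?B" using ys(2) by (simp add: distinct_butlast)
    have hB: "hd ?B = x" using hy ly by (cases ys) (auto simp: Suc_le_eq)
    have lB: "last ?B = bb"
    proof -
      have "?B \<noteq> []" using ly by (cases ys) (auto simp: Suc_le_eq)
      then have "last ?B = ?B ! (length ?B - 1)" by (simp add: last_conv_nth)
      also have "\<dots> = ys ! (length ys - 2)" using ly by (simp add: nth_butlast numeral_2_eq_2)
      finally show ?thesis using cb by simp
    qed
    have "?B = P" using path_unique[OF wB P(1) dB dP] hB lB P(2,3) by simp
    then have "set ys = set P \<union> {last ys}" using ysB by (metis set_append empty_set list.simps(15) Un_empty_right)
    moreover have "v \<in> set ys" using vtl by (cases ys) auto
    ultimately have "v \<in> set P \<or> v = last ys" by blast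
    then show ?thesis
    proof
      assume "v \<in> set P"
      then show ?thesis using vV(2) P(2) Pne by (cases P) auto
    qed (use ys(4) in simp)
  qed
  have Pe: "E (P ! i) (P ! Suc i)" if "Suc i < length P" for i
    using successively_nth[of E P i] P(1) that by (simp add: walk_def)
  have P0: "P ! 0 = x" using P(2) Pne hd_conv_nth[of P] by simp
  have Pl: "P ! (length P - 1) = bb" using P(3) Pne last_conv_nth[of P] by simp
  have inner: "\<not> leaf V E (P ! i)" if "0 < i" "i < length P - 1" for i
  proof -
    have "E (P ! i) (P ! (i - 1))" using Pe[of "i - 1"] that E_sym by simp
    moreover have "E (P ! i) (P ! Suc i)" using Pe[of i] that by simp
    moreover have "P ! (i - 1) \<noteq> P ! Suc i" using dP that nth_eq_iff_index_eq by fastforce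
    ultimately show ?thesis using two_nb_not_leaf by blast
  qed
  have Eyb: "E y0 bb" using leaf_adj[OF y0C y0l] .
  have y0P: "y0 \<notin> set P"
  proof
    assume "y0 \<in> set P"
    then obtain i where i: "i < length P" "P ! i = y0" by (auto simp: in_set_conv_nth)
    have "i \<noteq> 0" using i P0 y0C C_sub by auto
    moreover have "i \<noteq> length P - 1" using i Pl E_irr[OF Eyb] by auto
    ultimately have "0 < i" "i < length P - 1" using i by auto
    then show False using inner[of i] i y0l by simp
  qed
  have bnl: "\<not> leaf V E bb"
  proof -
    have "E bb (P ! (length P - 2))" using Pe[of "length P - 2"] lP Pl E_sym
      by (simp add: numeral_2_eq_2 Suc_diff_Suc)
    moreover have "E bb y0" using E_sym[OF Eyb] .
    moreover have "P ! (length P - 2) \<noteq> y0" using y0P lP nth_mem[of "length P - 2" P] by auto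
    ultimately show ?thesis using two_nb_not_leaf by blast
  qed
  have nl: "\<forall>v\<in>set (tl P). \<not> leaf V E v"
  proof
    fix v assume "v \<in> set (tl P)"
    then obtain j where j: "j < length (tl P)" "tl P ! j = v" by (auto simp: in_set_conv_nth)
    then have v: "v = P ! Suc j" "Suc j < length P" using Pne by (simp_all add: nth_tl)
    show "\<not> leaf V E v"
    proof (cases "Suc j = length P - 1")
      case True then show ?thesis using v Pl bnl by simp
    next
      case False then show ?thesis using v inner[of "Suc j"] by simp
    qed
  qed
  show ?thesis
    apply (rule exI[of _ P])
    using P(1,2,3) dP lP tlC S2 nl y0P by blast
qed


declare upt_Suc[simp del]

definition PP where "PP = (SOME P. walk V E P \<and> distinct P \<and> hd P = x \<and> length P \<ge> 2 \<and> last P = bb \<and> set (tl P) \<subseteq> C \<and>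
     (\<forall>v\<in>C. v \<in> set (tl P) \<or> leaf V E v) \<and> (\<forall>v\<in>set (tl P). \<not> leaf V E v) \<and> y0 \<notin> set P)"

lemma PP: "walk V E PP" "distinct PP" "hd PP = x" "length PP \<ge> 2" "last PP = bb" "set (tl PP) \<subseteq> C"
     "\<And>v. v \<in> C \<Longrightarrow> v \<in> set (tl PP) \<or> leaf V E v" "\<And>v. v \<in> set (tl PP) \<Longrightarrow> \<not> leaf V E v" "y0 \<notin> set PP"
  using someI_ex[OF broom] unfolding PP_def[symmetric] by blast+

definition qq where "qq = length PP - 1"
definition LL where "LL = {v\<in>C. leaf V E v}"
definition aa where "aa i = PP ! i"

lemma qq1: "qq \<ge> 1" "length PP = Suc qq" using PP(4) unfolding qq_def by auto

lemma PPne: "PP \<noteq> []" using qq1 by auto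
lemma aa0: "aa 0 = x" unfolding aa_def using PP(3) hd_conv_nth[OF PPne] by simp
lemma aaq: "aa qq = bb" unfolding aa_def qq_def using PP(5) last_conv_nth[OF PPne] by simp

lemma PP_map: "PP = map aa [0..<Suc qq]"
  by (rule nth_equalityI) (simp_all add: qq1 aa_def)

lemma succ_upt: "(\<And>k. i \<le> k \<Longrightarrow> k < j \<Longrightarrow> R (f k) (f (Suc k))) \<Longrightarrow> successively R (map f [i..<Suc j])"
proof (induction j)
  case 0 then show ?case by (cases i) (simp_all add: upt_Suc)
next
  case (Suc j)
  show ?case
  proof (cases "i \<le> Suc j")
    case True
    then have e: "[i..<Suc (Suc j)] = [i..<Suc j] @ [Suc j]" by (simp add: upt_Suc)
    show ?thesis
    proof (cases "i = Suc j")
      case True then show ?thesis by (simp add: upt_Suc)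
    next
      case False
      then have "i \<le> j" using \<open>i \<le> Suc j\<close> by simp
      then have "[i..<Suc j] \<noteq> []" "last [i..<Suc j] = j" by (simp_all add: upt_Suc)
      moreover have "successively R (map f [i..<Suc j])" using Suc by simp
      moreover have "R (f j) (f (Suc j))" using Suc.prems \<open>i \<le> j\<close> by simp
      ultimately show ?thesis unfolding e by (simp add: successively_append_iff last_map)
    qed
  qed simp
qed

lemma aa_inj: "inj_on aa {0..qq}"
  unfolding aa_def inj_on_def using PP(2) qq1 nth_eq_iff_index_eq by fastforce

lemma set_tl: "set (tl PP) = aa ` {1..qq}"
proof -
  have "tl PP = map aa [1..<Suc qq]" using PP_map by (simp add: upt_conv_Cons)
  then show ?thesis by (simp only: set_map set_upt atLeastLessThanSuc_atLeastAtMost)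
qed

lemma C_split: "C = aa ` {1..qq} \<union> LL" "aa ` {1..qq} \<inter> LL = {}"
  using PP(6,7,8) unfolding set_tl[symmetric] LL_def by blast+

lemma finC: "finite C" using C_sub finV finite_subset by blast
lemma finLL: "finite LL" using finC unfolding LL_def by simp

lemma LL_adj: "l \<in> LL \<Longrightarrow> E l bb" using leaf_adj unfolding LL_def by blast

lemma LL_notP: "l \<in> LL \<Longrightarrow> l \<notin> set PP"
proof
  assume l: "l \<in> LL" "l \<in> set PP"
  have "l \<noteq> x" using l(1) C_sub unfolding LL_def by auto
  then have "l \<in> set (tl PP)" using l(2) PP(3) qq1 by (cases PP) auto
  then show False using PP(8) l(1) unfolding LL_def by blast
qed

lemma aa_set: "i \<le> qq \<Longrightarrow> aa i \<in> set PP" unfolding aa_def using qq1 by simp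

lemma PP_edge: "i < qq \<Longrightarrow> E (aa i) (aa (Suc i))"
  unfolding aa_def using successively_nth[of E PP i] PP(1) qq1 by (simp add: walk_def)

lemma sub_walk: "i \<le> j \<Longrightarrow> j \<le> qq \<Longrightarrow>
  walk V E (map aa [i..<Suc j]) \<and> distinct (map aa [i..<Suc j])"
proof -
  assume ij: "i \<le> j" "j \<le> qq"
  have "successively E (map aa [i..<Suc j])"
    by (rule succ_upt) (use ij PP_edge in simp)
  moreover have "set (map aa [i..<Suc j]) \<subseteq> V"
    using ij aa_set PP(1) unfolding walk_def by auto
  moreover have "distinct (map aa [i..<Suc j])"
  proof -
    have "{i..<Suc j} \<subseteq> {0..qq}" using ij by auto
    then have "inj_on aa (set [i..<Suc j])" using inj_on_subset[OF aa_inj] by simp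
    then show ?thesis by (simp add: distinct_map)
  qed
  ultimately show ?thesis using ij by (simp add: walk_def)
qed

lemma d_path: "i \<le> j \<Longrightarrow> j \<le> qq \<Longrightarrow> dist V E (aa i) (aa j) = j - i"
proof -
  assume ij: "i \<le> j" "j \<le> qq"
  have "hd (map aa [i..<Suc j]) = aa i" using ij by (simp add: upt_conv_Cons)
  moreover have "last (map aa [i..<Suc j]) = aa j" using ij by (simp add: last_map upt_Suc)
  moreover have "length (map aa [i..<Suc j]) = Suc (j - i)" using ij by simp
  ultimately show ?thesis using path_dist[of "map aa [i..<Suc j]"] sub_walk[OF ij] ij by simp
qed


lemma aaV: "i \<le> qq \<Longrightarrow> aa i \<in> V" using aa_set PP(1) unfolding walk_def by blast

lemma d_path2: "i \<le> qq \<Longrightarrow> j \<le> qq \<Longrightarrow>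
  dist V E (aa i) (aa j) = (if i \<le> j then j - i else i - j)"
proof (cases "i \<le> j")
  case False
  assume ij: "i \<le> qq" "j \<le> qq"
  have "dist V E (aa i) (aa j) = dist V E (aa j) (aa i)" using dist_sym aaV ij by blast
  also have "\<dots> = i - j" using d_path[of j i] False ij by simp
  finally show ?thesis using False by simp
qed (simp add: d_path)

lemma LLV: "l \<in> LL \<Longrightarrow> l \<in> V" "l \<in> LL \<Longrightarrow> l \<in> C" using C_sub unfolding LL_def by auto

lemma d_leaf: assumes i: "i \<le> qq" and l: "l \<in> LL"
  shows "dist V E (aa i) l = Suc qq - i" "dist V E l (aa i) = Suc qq - i"
proof -
  let ?w = "map aa [i..<Suc qq] @ [l]"
  have sw: "walk V E (map aa [i..<Suc qq])" "distinct (map aa [i..<Suc qq])" using sub_walk[OF i] by auto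
  have la: "last (map aa [i..<Suc qq]) = bb" using i aaq by (simp add: last_map upt_Suc)
  have "walk V E ?w"
    using sw(1) LL_adj[OF l] E_sym LLV[OF l] la unfolding walk_def
    by (auto simp: successively_append_iff)
  moreover have "distinct ?w"
  proof -
    have "set (map aa [i..<Suc qq]) \<subseteq> set PP" using aa_set by auto
    then show ?thesis using sw(2) LL_notP[OF l] by auto
  qed
  moreover have "hd ?w = aa i" using i by (simp add: upt_conv_Cons)
  moreover have "last ?w = l" by simp
  moreover have "length ?w = Suc (Suc qq - i)" using i by simp
  ultimately show "dist V E (aa i) l = Suc qq - i" using path_dist[of ?w] by simp
  then show "dist V E l (aa i) = Suc qq - i" using dist_sym aaV[OF i] LLV[OF l] by simp
qed

lemma d_ll: assumes "l \<in> LL" "l' \<in> LL" "l \<noteq> l'" shows "dist V E l l' = 2"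
proof -
  have bP: "bb \<in> set PP" using aaq aa_set[of qq] by simp
  have "walk V E [l, bb, l']" using LL_adj assms E_sym LLV by (simp add: walk_def bbC) (meson C_sub(1) bbC subsetD)
  moreover have "distinct [l, bb, l']" using LL_notP assms bP by auto
  ultimately show ?thesis using path_dist[of "[l, bb, l']"] by simp
qed

lemma y0LL: "y0 \<in> LL" unfolding LL_def using y0C y0l by simp

lemma d_xy0: "dist V E x y0 = Suc qq" using d_leaf(1)[OF _ y0LL, of 0] aa0 by simp

lemma sumC: "(\<Sum>w\<in>C. f w) = (\<Sum>i\<in>{1..qq}. f (aa i)) + (\<Sum>l\<in>LL. f l)"
proof -
  have "(\<Sum>w\<in>C. f w) = (\<Sum>w\<in>aa ` {1..qq} \<union> LL. f w)" using C_split(1) by simp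
  also have "\<dots> = (\<Sum>w\<in>aa ` {1..qq}. f w) + (\<Sum>l\<in>LL. f l)"
    by (rule sum.union_disjoint) (use C_split(2) finLL in simp_all)
  also have "(\<Sum>w\<in>aa ` {1..qq}. f w) = (\<Sum>i\<in>{1..qq}. f (aa i))"
  proof -
    have "inj_on aa {1..qq}" by (rule inj_on_subset[OF aa_inj]) auto
    then show ?thesis by (simp add: sum.reindex)
  qed
  finally show ?thesis .
qed

lemma d_x: "i \<le> qq \<Longrightarrow> dist V E x (aa i) = i" using d_path[of 0 i] aa0 by simp
lemma d_b: "i \<le> qq \<Longrightarrow> dist V E bb (aa i) = qq - i" using d_path2[of qq i] aaq by simp

lemma SC: "(\<Sum>w\<in>C. dist V E x w) = (\<Sum>i\<in>{1..qq}. i) + card LL * Suc qq"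
proof -
  have "(\<Sum>i\<in>{1..qq}. dist V E x (aa i)) = (\<Sum>i\<in>{1..qq}. i)"
    by (rule sum.cong) (simp_all add: d_x)
  moreover have "(\<Sum>l\<in>LL. dist V E x l) = (\<Sum>l\<in>LL. Suc qq)"
    by (rule sum.cong) (use d_leaf(1)[of 0] aa0 in simp_all)
  then have "(\<Sum>l\<in>LL. dist V E x l) = card LL * Suc qq" by simp
  ultimately show ?thesis using sumC[of "\<lambda>w. dist V E x w"] by simp
qed

lemma QC: "(\<Sum>w\<in>C. dist V E bb w) = (\<Sum>i\<in>{1..qq}. qq - i) + card LL"
proof -
  have "(\<Sum>i\<in>{1..qq}. dist V E bb (aa i)) = (\<Sum>i\<in>{1..qq}. qq - i)"
    by (rule sum.cong) (simp_all add: d_b)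
  moreover have "(\<Sum>l\<in>LL. dist V E bb l) = (\<Sum>l\<in>LL. 1)"
    by (rule sum.cong) (use d_leaf(1)[of qq] aaq in simp_all)
  then have "(\<Sum>l\<in>LL. dist V E bb l) = card LL" by simp
  ultimately show ?thesis using sumC[of "\<lambda>w. dist V E bb w"] by simp
qed

lemma WC: "(\<Sum>u\<in>C. \<Sum>w\<in>C. dist V E u w) =
   (\<Sum>i\<in>{1..qq}. \<Sum>j\<in>{1..qq}. if i \<le> j then j - i else i - j)
   + 2 * (card LL * (\<Sum>i\<in>{1..qq}. Suc qq - i)) + card LL * (2 * (card LL - 1))"
proof -
  have inner1: "(\<Sum>w\<in>C. dist V E (aa i) w) = (\<Sum>j\<in>{1..qq}. if i \<le> j then j - i else i - j)
     + card LL * (Suc qq - i)" if i: "i \<in> {1..qq}" for i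
  proof -
    have "(\<Sum>j\<in>{1..qq}. dist V E (aa i) (aa j)) = (\<Sum>j\<in>{1..qq}. if i \<le> j then j - i else i - j)"
      by (rule sum.cong) (use i d_path2 in simp_all)
    moreover have "(\<Sum>l\<in>LL. dist V E (aa i) l) = (\<Sum>l\<in>LL. Suc qq - i)"
      by (rule sum.cong) (use i d_leaf(1) in simp_all)
    then have "(\<Sum>l\<in>LL. dist V E (aa i) l) = card LL * (Suc qq - i)" by simp
    ultimately show ?thesis using sumC[of "\<lambda>w. dist V E (aa i) w"] by simp
  qed
  have inner2: "(\<Sum>w\<in>C. dist V E l w) = (\<Sum>j\<in>{1..qq}. Suc qq - j) + 2 * (card LL - 1)"
    if l: "l \<in> LL" for l
  proof -
    have "(\<Sum>j\<in>{1..qq}. dist V E l (aa j)) = (\<Sum>j\<in>{1..qq}. Suc qq - j)"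
      by (rule sum.cong) (use l d_leaf(2) in simp_all)
    moreover have "(\<Sum>l'\<in>LL. dist V E l l') = 2 * (card LL - 1)"
    proof -
      have "(\<Sum>l'\<in>LL. dist V E l l') = dist V E l l + (\<Sum>l'\<in>LL - {l}. dist V E l l')"
        using sum.remove[OF finLL l] by simp
      also have "\<dots> = (\<Sum>l'\<in>LL - {l}. 2)"
      proof -
        have "dist V E l l = 0" using dist_self LLV[OF l] by simp
        moreover have "(\<Sum>l'\<in>LL - {l}. dist V E l l') = (\<Sum>l'\<in>LL - {l}. 2)"
          by (rule sum.cong) (use d_ll[OF l] in auto)
        ultimately show ?thesis by simp
      qed
      also have "\<dots> = 2 * (card LL - 1)" using l finLL by simp
      finally show ?thesis .
    qed
    ultimately show ?thesis using sumC[of "\<lambda>w. dist V E l w"] by simp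
  qed
  have "(\<Sum>u\<in>C. \<Sum>w\<in>C. dist V E u w) =
     (\<Sum>i\<in>{1..qq}. \<Sum>w\<in>C. dist V E (aa i) w) + (\<Sum>l\<in>LL. \<Sum>w\<in>C. dist V E l w)"
    by (rule sumC)
  also have "\<dots> = (\<Sum>i\<in>{1..qq}. (\<Sum>j\<in>{1..qq}. if i \<le> j then j - i else i - j)
     + card LL * (Suc qq - i)) + (\<Sum>l\<in>LL. (\<Sum>j\<in>{1..qq}. Suc qq - j) + 2 * (card LL - 1))"
    using inner1 inner2 by simp
  also have "\<dots> = (\<Sum>i\<in>{1..qq}. \<Sum>j\<in>{1..qq}. if i \<le> j then j - i else i - j)
   + 2 * (card LL * (\<Sum>i\<in>{1..qq}. Suc qq - i)) + card LL * (2 * (card LL - 1))"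
  proof -
    have e1: "(\<Sum>i\<in>{1..qq}. (\<Sum>j\<in>{1..qq}. if i \<le> j then j - i else i - j) + card LL * (Suc qq - i))
      = (\<Sum>i\<in>{1..qq}. \<Sum>j\<in>{1..qq}. if i \<le> j then j - i else i - j) + card LL * (\<Sum>i\<in>{1..qq}. Suc qq - i)"
      by (simp add: sum.distrib sum_distrib_left)
    have e2: "(\<Sum>l\<in>LL. (\<Sum>j\<in>{1..qq}. Suc qq - j) + 2 * (card LL - 1)) =
      card LL * ((\<Sum>j\<in>{1..qq}. Suc qq - j) + 2 * (card LL - 1))" by simp
    show ?thesis unfolding e1 e2 by (simp add: algebra_simps)
  qed
  finally show ?thesis .
qed


lemma card_C: "card C = qq + card LL"
proof -
  have "card C = card (aa ` {1..qq} \<union> LL)" using C_split(1) by simp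
  also have "\<dots> = card (aa ` {1..qq}) + card LL"
    by (rule card_Un_disjoint) (use C_split(2) finLL in simp_all)
  finally have "card C = card (aa ` {1..qq}) + card LL" .
  moreover have "card (aa ` {1..qq}) = qq"
  proof -
    have "inj_on aa {1..qq}" by (rule inj_on_subset[OF aa_inj]) auto
    then show ?thesis by (simp add: card_image)
  qed
  ultimately show ?thesis by simp
qed

end

lemma cf1: "2 * (\<Sum>i\<in>{1..q}. i) = (q::nat) * (Suc q)"
  by (induction q) (simp_all add: algebra_simps)

lemma cf2: "(\<Sum>i\<in>{1..q}. q - i) + (\<Sum>i\<in>{1..q}. i) = (q::nat) * q"
proof -
  have "(\<Sum>i\<in>{1..q}. q - i) + (\<Sum>i\<in>{1..q}. i) = (\<Sum>i\<in>{1..q}. q - i + i)"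
    by (rule sum.distrib[symmetric])
  also have "\<dots> = (\<Sum>i\<in>{1..q}. q)" by (rule sum.cong) auto
  also have "\<dots> = q * q" by simp
  finally show ?thesis .
qed

lemma cf3: "(\<Sum>i\<in>{1..q}. Suc q - i) = (\<Sum>i\<in>{1..(q::nat)}. i)"
proof -
  have "(\<Sum>i\<in>{1..q}. Suc q - i) + (\<Sum>i\<in>{1..q}. i) = (\<Sum>i\<in>{1..q}. Suc q - i + i)"
    by (rule sum.distrib[symmetric])
  also have "\<dots> = (\<Sum>i\<in>{1..q}. Suc q)" by (rule sum.cong) auto
  also have "\<dots> = q * Suc q" by simp
  finally have "(\<Sum>i\<in>{1..q}. Suc q - i) + (\<Sum>i\<in>{1..q}. i) = q * Suc q" .
  then show ?thesis using cf1[of q] by linarith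
qed

lemma cf4: "3 * int (\<Sum>i\<in>{1..q}. \<Sum>j\<in>{1..q}. if i \<le> j then j - i else i - j) = (int q - 1) * q * (q + 1)"
proof (induction q)
  case 0 then show ?case by simp
next
  case (Suc q)
  let ?f = "\<lambda>i j. if i \<le> j then j - i else i - (j::nat)"
  have a: "(\<Sum>i\<in>{1..Suc q}. \<Sum>j\<in>{1..Suc q}. ?f i j)
     = (\<Sum>i\<in>{1..q}. \<Sum>j\<in>{1..Suc q}. ?f i j) + (\<Sum>j\<in>{1..Suc q}. ?f (Suc q) j)" by simp
  have b: "(\<Sum>i\<in>{1..q}. \<Sum>j\<in>{1..Suc q}. ?f i j) = (\<Sum>i\<in>{1..q}. (\<Sum>j\<in>{1..q}. ?f i j) + (Suc q - i))"
    by (rule sum.cong) auto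
  have c: "(\<Sum>j\<in>{1..Suc q}. ?f (Suc q) j) = (\<Sum>j\<in>{1..q}. Suc q - j)"
  proof -
    have "(\<Sum>j\<in>{1..Suc q}. ?f (Suc q) j) = (\<Sum>j\<in>{1..q}. ?f (Suc q) j)" by simp
    also have "\<dots> = (\<Sum>j\<in>{1..q}. Suc q - j)" by (rule sum.cong) auto
    finally show ?thesis .
  qed
  have "(\<Sum>i\<in>{1..Suc q}. \<Sum>j\<in>{1..Suc q}. ?f i j) = (\<Sum>i\<in>{1..q}. \<Sum>j\<in>{1..q}. ?f i j)
     + 2 * (\<Sum>i\<in>{1..q}. i)"
  proof -
    have "(\<Sum>i\<in>{1..q}. (\<Sum>j\<in>{1..q}. ?f i j) + (Suc q - i)) =
      (\<Sum>i\<in>{1..q}. \<Sum>j\<in>{1..q}. ?f i j) + (\<Sum>i\<in>{1..q}. Suc q - i)" by (rule sum.distrib)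
    then show ?thesis unfolding a b c cf3 by simp
  qed
  then have "(\<Sum>i\<in>{1..Suc q}. \<Sum>j\<in>{1..Suc q}. ?f i j) = (\<Sum>i\<in>{1..q}. \<Sum>j\<in>{1..q}. ?f i j)
     + q * Suc q" using cf1[of q] by linarith
  then have "int (\<Sum>i\<in>{1..Suc q}. \<Sum>j\<in>{1..Suc q}. ?f i j) = int (\<Sum>i\<in>{1..q}. \<Sum>j\<in>{1..q}. ?f i j)
     + int q * (int q + 1)" by (simp add: algebra_simps)
  then show ?case using Suc.IH by (simp add: algebra_simps)
qed


lemma (in ctree) pot_lip: "u \<in> V \<Longrightarrow> E a b \<Longrightarrow> dist V E u b \<le> dist V E u a + 1"
proof -
  assume u: "u \<in> V" and e: "E a b"
  have "dist V E a b \<le> 1" using dist_le_walk[of V E "[a, b]"] e E_V by (simp add: walk_def)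
  then show ?thesis using dist_tri[OF u E_V(1)[OF e] E_V(2)[OF e]] by simp
qed

locale move_setting = comp_setting + fixes y' assumes y'V: "y' \<in> V" and y'C: "y' \<notin> C"
begin

abbreviation "V' \<equiv> move_V V C"
abbreviation "E' \<equiv> move_E E C y'"

lemma E'_simps:
  "E' (Inl a) (Inl b) \<longleftrightarrow> E a b \<and> a \<notin> C \<and> b \<notin> C"
  "E' (Inl a) (Inr i) \<longleftrightarrow> a = y' \<and> i < card C"
  "E' (Inr i) (Inl a) \<longleftrightarrow> a = y' \<and> i < card C"
  "\<not> E' (Inr i) (Inr j)"
  by (simp_all add: move_E_def)

lemma V'_simps: "Inl a \<in> V' \<longleftrightarrow> a \<in> V \<and> a \<notin> C" "Inr i \<in> V' \<longleftrightarrow> i < card C"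
  by (auto simp: move_V_def)

lemma avoid_walk:
  assumes u: "u \<in> V" "u \<notin> C" and w: "w \<in> V" "w \<notin> C"
  shows "\<exists>ws. walk V E ws \<and> hd ws = u \<and> last ws = w \<and> length ws = Suc (dist V E u w) \<and> set ws \<inter> C = {}"
proof -
  obtain ws where ws: "walk V E ws" "hd ws = u" "last ws = w" "length ws = Suc (dist V E u w)"
    using dist_ex[OF u(1) w(1)] by blast
  have d: "distinct ws" using shortest_distinct ws by simp
  have "set ws \<inter> C = {}"
  proof (rule ccontr)
    assume "set ws \<inter> C \<noteq> {}"
    then obtain z where z: "z \<in> set ws" "z \<in> C" by blast
    obtain as bs where sp: "ws = as @ z # bs" using split_list[OF z(1)] by (elim exE)
    have zx: "z \<noteq> x" using z C_sub by auto
    have w1: "successively E (as @ [z])" "set (as @ [z]) \<subseteq> V" using ws(1) unfolding sp walk_def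
      by (simp_all add: successively_append_iff successively_Cons)
    have w2: "successively E (z # bs)" "set (z # bs) \<subseteq> V" using ws(1) unfolding sp walk_def
      by (simp_all add: successively_append_iff)
    have "x \<in> set (as @ [z])"
    proof (rule ccontr)
      assume nx: "x \<notin> set (as @ [z])"
      have uin: "u \<in> set (as @ [z])" using ws(2) sp by (cases as) auto
      have "u \<in> C \<longleftrightarrow> z \<in> C" by (rule walk_C[OF w1(1) w1(2) nx uin]) simp
      then show False using u z by simp
    qed
    then have xa: "x \<in> set as" using zx by simp
    have "x \<in> set (z # bs)"
    proof (rule ccontr)
      assume nx: "x \<notin> set (z # bs)"
      have "last ws = last (z # bs)" unfolding sp by simp
      then have win: "w \<in> set (z # bs)" using ws(3) last_in_set[of "z # bs"] by simp
      have "w \<in> C \<longleftrightarrow> z \<in> C" by (rule walk_C[OF w2(1) w2(2) nx win]) simp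
      then show False using w z by simp
    qed
    then have xb: "x \<in> set bs" using zx by simp
    have dj: "set as \<inter> set (z # bs) = {}" using d unfolding sp by simp
    have "x \<in> set as \<inter> set (z # bs)" using xa xb by simp
    then show False unfolding dj by (rule emptyE)
  qed
  then show ?thesis using ws by (intro exI[of _ ws]) simp
qed

lemma lift_walk: "walk V E ws \<Longrightarrow> set ws \<inter> C = {} \<Longrightarrow> walk V' E' (map Inl ws)"
proof -
  assume w: "walk V E ws" "set ws \<inter> C = {}"
  have "successively E' (map Inl ws)"
    unfolding successively_map
    by (rule successively_mono[of E]) (use w in \<open>auto simp: walk_def E'_simps\<close>)
  moreover have "set (map Inl ws) \<subseteq> V'" using w by (auto simp: walk_def V'_simps)
  ultimately show ?thesis using w by (simp add: walk_def)
qed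

definition fp where "fp u = case_sum (\<lambda>a. dist V E u a) (\<lambda>j. dist V E u y' + 1)"
definition gp where "gp i = case_sum (\<lambda>a. dist V E y' a + 1) (\<lambda>j. if j = i then 0 else 2)"

lemma fp_lip: assumes u: "u \<in> V" and e: "E' z1 z2" shows "fp u z2 \<le> fp u z1 + 1"
proof (cases z1)
  case (Inl a) note z1 = this
  show ?thesis
  proof (cases z2)
    case (Inl b)
    then have "E a b" using e z1 E'_simps by simp
    then show ?thesis using pot_lip[OF u] z1 Inl by (simp add: fp_def)
  next
    case (Inr j)
    then have "a = y'" using e z1 E'_simps by simp
    then show ?thesis using z1 Inr by (simp add: fp_def)
  qed
next
  case (Inr i) note z1 = this
  show ?thesis
  proof (cases z2)
    case (Inl b)
    then have "b = y'" using e z1 E'_simps by simp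
    then show ?thesis using z1 Inl by (simp add: fp_def)
  next
    case (Inr j)
    then show ?thesis using e z1 E'_simps by simp
  qed
qed

lemma gp_lip: assumes e: "E' z1 z2" shows "gp i z2 \<le> gp i z1 + 1"
proof (cases z1)
  case (Inl a) note z1 = this
  show ?thesis
  proof (cases z2)
    case (Inl b)
    then have "E a b" using e z1 E'_simps by simp
    then show ?thesis using pot_lip[OF y'V] z1 Inl by (simp add: gp_def)
  next
    case (Inr j)
    then have "a = y'" using e z1 E'_simps by simp
    then show ?thesis using z1 Inr dist_self[OF y'V] by (simp add: gp_def)
  qed
next
  case (Inr j) note z1 = this
  show ?thesis
  proof (cases z2)
    case (Inl b)
    then have "b = y'" using e z1 E'_simps by simp
    then show ?thesis using z1 Inl dist_self[OF y'V] by (simp add: gp_def)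
  next
    case (Inr k)
    then show ?thesis using e z1 E'_simps by simp
  qed
qed


lemma d'1: assumes u: "u \<in> V" "u \<notin> C" and w: "w \<in> V" "w \<notin> C"
  shows "dist V' E' (Inl u) (Inl w) = dist V E u w"
proof -
  obtain ws where ws: "walk V E ws" "hd ws = u" "last ws = w" "length ws = Suc (dist V E u w)" "set ws \<inter> C = {}"
    using avoid_walk[OF u w] by (elim exE conjE) simp
  have wne: "ws \<noteq> []" using ws(4) by auto
  show ?thesis
  proof (rule dist_eqI[of _ _ "map Inl ws"])
    show "walk V' E' (map Inl ws)" using lift_walk ws by simp
    show "hd (map Inl ws) = Inl u" using ws(2) wne by (simp add: hd_map)
    show "last (map Inl ws) = Inl w" using ws(3) wne by (simp add: last_map)
    show "length (map Inl ws) = Suc (dist V E u w)" using ws(4) by simp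
  next
    fix ys assume ys: "walk V' E' ys" "hd ys = Inl u" "last ys = Inl w"
    have "fp u (last ys) \<le> fp u (hd ys) + (length ys - 1)"
      by (rule potential_walk[OF ys(1)]) (rule fp_lip[OF u(1)])
    then show "dist V E u w \<le> length ys - 1" using ys dist_self[OF u(1)] by (simp add: fp_def)
  qed
qed

lemma d'2: assumes u: "u \<in> V" "u \<notin> C" and i: "i < card C"
  shows "dist V' E' (Inl u) (Inr i) = Suc (dist V E u y')"
proof -
  obtain ws where ws: "walk V E ws" "hd ws = u" "last ws = y'" "length ws = Suc (dist V E u y')" "set ws \<inter> C = {}"
    using avoid_walk[OF u y'V y'C] by (elim exE conjE) simp
  have wne: "ws \<noteq> []" using ws(4) by auto
  show ?thesis
  proof (rule dist_eqI[of _ _ "map Inl ws @ [Inr i]"])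
    have "walk V' E' (map Inl ws)" using lift_walk ws by simp
    moreover have "E' (last (map Inl ws)) (Inr i)" using ws(3) wne i by (simp add: last_map E'_simps)
    moreover have "Inr i \<in> V'" using i V'_simps by simp
    ultimately show "walk V' E' (map Inl ws @ [Inr i])" unfolding walk_def
      by (simp add: successively_append_iff)
    show "hd (map Inl ws @ [Inr i]) = Inl u" using ws(2) wne by (simp add: hd_map)
    show "last (map Inl ws @ [Inr i]) = Inr i" by simp
    show "length (map Inl ws @ [Inr i]) = Suc (Suc (dist V E u y'))" using ws(4) by simp
  next
    fix ys assume ys: "walk V' E' ys" "hd ys = Inl u" "last ys = Inr i"
    have "fp u (last ys) \<le> fp u (hd ys) + (length ys - 1)"
      by (rule potential_walk[OF ys(1)]) (rule fp_lip[OF u(1)])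
    then show "Suc (dist V E u y') \<le> length ys - 1" using ys dist_self[OF u(1)] by (simp add: fp_def)
  qed
qed

lemma d'3: assumes u: "u \<in> V" "u \<notin> C" and i: "i < card C"
  shows "dist V' E' (Inr i) (Inl u) = Suc (dist V E y' u)"
proof -
  obtain ws where ws: "walk V E ws" "hd ws = y'" "last ws = u" "length ws = Suc (dist V E y' u)" "set ws \<inter> C = {}"
    using avoid_walk[OF y'V y'C u] by (elim exE conjE) simp
  have wne: "ws \<noteq> []" using ws(4) by auto
  show ?thesis
  proof (rule dist_eqI[of _ _ "Inr i # map Inl ws"])
    have "walk V' E' (map Inl ws)" using lift_walk ws by simp
    moreover have "E' (Inr i) (hd (map Inl ws))" using ws(2) wne i by (simp add: hd_map E'_simps)
    moreover have "Inr i \<in> V'" using i V'_simps by simp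
    ultimately show "walk V' E' (Inr i # map Inl ws)" unfolding walk_def
      by (simp add: successively_Cons)
    show "hd (Inr i # map Inl ws) = Inr i" by simp
    show "last (Inr i # map Inl ws) = Inl u" using ws(3) wne by (simp add: last_map)
    show "length (Inr i # map Inl ws) = Suc (Suc (dist V E y' u))" using ws(4) by simp
  next
    fix ys assume ys: "walk V' E' ys" "hd ys = Inr i" "last ys = Inl u"
    have "gp i (last ys) \<le> gp i (hd ys) + (length ys - 1)"
      by (rule potential_walk[OF ys(1)]) (rule gp_lip)
    then show "Suc (dist V E y' u) \<le> length ys - 1" using ys by (simp add: gp_def)
  qed
qed

lemma d'4: assumes i: "i < card C" and j: "j < card C"
  shows "dist V' E' (Inr i) (Inr j) = (if i = j then 0 else 2)"
proof (cases "i = j")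
  case True
  have "walk V' E' [Inr i]" using i V'_simps by (simp add: walk_def)
  then have "dist V' E' (Inr i) (Inr i) \<le> 0" using dist_le_walk[of V' E' "[Inr i]"] by simp
  then show ?thesis using True by simp
next
  case False
  have y'V': "Inl y' \<in> V'" using y'V y'C V'_simps by simp
  have "dist V' E' (Inr i) (Inr j) = 2"
  proof (rule dist_eqI[of _ _ "[Inr i, Inl y', Inr j]"])
    show "walk V' E' [Inr i, Inl y', Inr j]" using i j y'V' V'_simps E'_simps by (simp add: walk_def)
    fix ys assume ys: "walk V' E' ys" "hd ys = Inr i" "last ys = Inr j"
    have "gp i (last ys) \<le> gp i (hd ys) + (length ys - 1)"
      by (rule potential_walk[OF ys(1)]) (rule gp_lip)
    then show "2 \<le> length ys - 1" using ys False by (simp add: gp_def)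
  qed simp_all
  then show ?thesis using False by simp
qed

end


lemma even_sym:
  fixes g :: "'b \<Rightarrow> 'b \<Rightarrow> nat"
  assumes "finite S" "\<And>u v. u \<in> S \<Longrightarrow> v \<in> S \<Longrightarrow> g u v = g v u" "\<And>u. u \<in> S \<Longrightarrow> g u u = 0"
  shows "even (\<Sum>u\<in>S. \<Sum>v\<in>S. g u v)"
  using assms
proof (induction S rule: finite_induct)
  case empty then show ?case by simp
next
  case (insert a S)
  have ih: "even (\<Sum>u\<in>S. \<Sum>v\<in>S. g u v)" using insert by simp
  have "(\<Sum>u\<in>insert a S. \<Sum>v\<in>insert a S. g u v) =
     (\<Sum>v\<in>insert a S. g a v) + (\<Sum>u\<in>S. \<Sum>v\<in>insert a S. g u v)"
    using insert(1,2) by (rule sum.insert)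
  also have "(\<Sum>v\<in>insert a S. g a v) = (\<Sum>v\<in>S. g a v)"
    using insert by (simp add: sum.insert)
  also have "(\<Sum>u\<in>S. \<Sum>v\<in>insert a S. g u v) = (\<Sum>u\<in>S. g u a + (\<Sum>v\<in>S. g u v))"
    by (rule sum.cong) (use insert(1,2) in \<open>simp_all add: sum.insert\<close>)
  also have "\<dots> = (\<Sum>u\<in>S. g a u) + (\<Sum>u\<in>S. \<Sum>v\<in>S. g u v)"
  proof -
    have "(\<Sum>u\<in>S. g u a) = (\<Sum>u\<in>S. g a u)" by (rule sum.cong) (use insert.prems in simp_all)
    then show ?thesis by (simp add: sum.distrib)
  qed
  finally have "(\<Sum>u\<in>insert a S. \<Sum>v\<in>insert a S. g u v) = 2 * (\<Sum>u\<in>S. g a u) + (\<Sum>u\<in>S. \<Sum>v\<in>S. g u v)"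
    by simp
  then show ?case using ih by simp
qed

lemma sum_moveV:
  assumes "finite A'"
  shows "(\<Sum>z\<in>Inl ` A' \<union> Inr ` {..<m}. f z) = (\<Sum>a\<in>A'. f (Inl a)) + (\<Sum>i<(m::nat). f (Inr i))"
proof -
  have "(\<Sum>z\<in>Inl ` A' \<union> Inr ` {..<m}. f z) = (\<Sum>z\<in>Inl ` A'. f z) + (\<Sum>z\<in>Inr ` {..<m}. f z)"
    by (rule sum.union_disjoint) (use assms in auto)
  also have "(\<Sum>z\<in>Inl ` A'. f z) = (\<Sum>a\<in>A'. f (Inl a))" by (simp add: sum.reindex)
  also have "(\<Sum>z\<in>Inr ` {..<m}. f z) = (\<Sum>i<m. f (Inr i))" by (simp add: sum.reindex)
  finally show ?thesis .
qed

lemma (in ctree) comp_disj: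
  assumes c1: "component (del_V V x) (del_E E x) C1" and c2: "component (del_V V x) (del_E E x) C2"
    and xV: "x \<in> V" and ne: "C1 \<noteq> C2"
  shows "C1 \<inter> C2 = {}"
proof (rule ccontr)
  interpret K1: comp_setting V E x C1 by unfold_locales (use xV c1 in simp_all)
  interpret K2: comp_setting V E x C2 by unfold_locales (use xV c2 in simp_all)
  assume "C1 \<inter> C2 \<noteq> {}"
  then obtain z where z: "z \<in> C1" "z \<in> C2" by blast
  have sub: "Ca \<subseteq> Cb" if a: "comp_setting V E x Ca" and b: "comp_setting V E x Cb" and za: "z \<in> Ca" and zb: "z \<in> Cb"
    for Ca Cb
  proof
    fix u assume u: "u \<in> Ca"
    obtain ws where ws: "walk Ca E ws" "hd ws = z" "last ws = u" using comp_setting.C_conn[OF a za u] by blast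
    have sub: "set ws \<subseteq> Ca" "ws \<noteq> []" "successively E ws" using ws(1) by (simp_all add: walk_def)
    have "x \<notin> set ws" using sub comp_setting.C_sub(2)[OF a] by blast
    moreover have "set ws \<subseteq> V" using sub comp_setting.C_sub(1)[OF a] by blast
    moreover have "z \<in> set ws" "u \<in> set ws" using ws sub(2) hd_in_set last_in_set by metis+
    ultimately have "z \<in> Cb \<longleftrightarrow> u \<in> Cb" using comp_setting.walk_C[OF b sub(3)] by blast
    then show "u \<in> Cb" using zb by simp
  qed
  have "C1 \<subseteq> C2" by (rule sub) (use z K1.comp_setting_axioms K2.comp_setting_axioms in simp_all)
  moreover have "C2 \<subseteq> C1" by (rule sub) (use z K1.comp_setting_axioms K2.comp_setting_axioms in simp_all)
  ultimately show False using ne by simp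
qed

lemma final_arith:
  fixes TT TT' AA cA SX m2 DA W2 QA QC1 SC1 DR q t1 t2 S R G n m1 :: real
  assumes "TT = AA + 2*(cA*SX + m2*DA) + W2" "TT' = AA + 2*(m2*(QA+cA)) + m2*(2*(m2-1))"
   "QA = QC1 + (cA - m1)*q + DR" "DA = SC1 + DR" "SX = S + t2*(q+1)" "SC1 = S + t1*(q+1)" "QC1 = R + t1"
   "R + S = q*q" "2*S = q*(q+1)" "3*G = (q-1)*q*(q+1)" "W2 = G + 2*(t2*S) + t2*(2*(t2-1))"
   "m1 = q + t1" "m2 = q + t2" "t1 = t2 + 1" "n = cA + m2"
  shows "3*(TT - TT') = q * (12*t1^2 + 24*t1*(q+1) - 36*t1 + 10*(q+1)^2 - 29*(q+1) + 24 - 3*(q+1)*n)"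
proof -
  have R: "R = q*q - S" using assms(8) by simp
  have S: "S = q*(q+1)/2" using assms(9) by simp
  have G: "G = (q-1)*q*(q+1)/3" using assms(10) by simp
  show ?thesis unfolding assms(1,2,3,4,5,6,7,11,12,13,14,15) R S G
    by (simp add: field_simps power2_eq_square)
qed

lemma final_sqrt:
  fixes t p n :: real
  assumes "t \<ge> 1" "p \<ge> 2"
  shows "(0 \<le> 12*t^2 + 24*t*p - 36*t + 10*p^2 - 29*p + 24 - 3*p*n) \<longleftrightarrow>
    t \<ge> sqrt ((p*(3*n + 2*p - 7) + 3)/12) - p + 3/2"
proof -
  define b where "b = t + p - 3/2"
  define X where "X = (p*(3*n + 2*p - 7) + 3)/12"
  have b0: "0 \<le> b" using assms unfolding b_def by simp
  have K: "12*t^2 + 24*t*p - 36*t + 10*p^2 - 29*p + 24 - 3*p*n = 12 * (b^2 - X)"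
    unfolding b_def X_def by (simp add: field_simps power2_eq_square)
  have "t \<ge> sqrt X - p + 3/2 \<longleftrightarrow> sqrt X \<le> b" unfolding b_def by linarith
  also have "\<dots> \<longleftrightarrow> X \<le> b^2"
  proof
    assume "sqrt X \<le> b" then show "X \<le> b^2" by (rule sqrt_le_D)
  next
    assume h: "X \<le> b^2" show "sqrt X \<le> b" by (rule real_le_lsqrt[OF b0 h])
  qed
  finally have F: "t \<ge> sqrt X - p + 3/2 \<longleftrightarrow> X \<le> b^2" .
  have e: "(0 \<le> 12 * (b^2 - X)) \<longleftrightarrow> X \<le> b^2" by (simp add: right_diff_distrib)
  have "(0 \<le> 12*t^2 + 24*t*p - 36*t + 10*p^2 - 29*p + 24 - 3*p*n) \<longleftrightarrow> t \<ge> sqrt X - p + 3/2"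
    unfolding K e F ..
  then show ?thesis unfolding X_def .
qed

theorem mainTheorem7:
  fixes V :: "'a set" and E :: "'a \<Rightarrow> 'a \<Rightarrow> bool"
    and x y1 y2 y1' :: 'a and T1 T2 :: "'a set"
  assumes "max_wiener_tree V E"
    and "special_vertex V E x"
    and "T1 \<noteq> T2" and "special_pair V E x T1 T2"
    and "y1 \<in> T1" and "leaf V E y1" and "y2 \<in> T2" and "leaf V E y2"
    and "broom_vertex V E y1'" and "E y1 y1'"
    and "dist V E x y1 = dist V E x y2"
    and "card {y \<in> T1. leaf V E y} = card {y \<in> T2. leaf V E y} + 1"
  shows "wiener V E \<ge> wiener (move_V V T2) (move_E E T2 y1') \<longleftrightarrow>
    real (card {y \<in> T1. leaf V E y}) \<ge>
      sqrt ((real (dist V E x y1) * (3 * real (card V) + 2 * real (dist V E x y1) - 7) + 3) / 12)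
      - real (dist V E x y1) + 3 / 2"
proof -
  have tr: "tree V E" using assms(1) unfolding max_wiener_tree_def by blast
  have sgV: "simple_graph V E" "connected_graph V E" "acyclic_graph V E" using tr unfolding tree_def by blast+
  interpret ctree V E by unfold_locales (use sgV in simp_all)
  have xV: "x \<in> V" and dx: "3 \<le> degree V E x" using assms(2) unfolding special_vertex_def by blast+
  have xnl: "\<not> leaf V E x" using dx unfolding leaf_def by simp
  have c1: "component (del_V V x) (del_E E x) T1" and c2: "component (del_V V x) (del_E E x) T2"
    and o1: "card {b \<in> T1. broom_vertex V E b} = 1" and o2: "card {b \<in> T2. broom_vertex V E b} = 1"
    using assms(4) unfolding special_pair_def by blast+
  interpret B1: broom_setting V E x T1 y1 by unfold_locales (use xV c1 xnl o1 assms(5,6) in simp_all)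
  interpret B2: broom_setting V E x T2 y2 by unfold_locales (use xV c2 xnl o2 assms(7,8) in simp_all)
  have disj: "T1 \<inter> T2 = {}" by (rule comp_disj[OF c1 c2 xV assms(3)])
  have y1'b: "y1' = B1.bb" using leaf_nb_eq[OF assms(6) assms(10) B1.leaf_adj[OF assms(5,6)]] .
  have y1'T1: "y1' \<in> T1" using B1.bbC y1'b by simp
  have y1'V: "y1' \<in> V" using y1'T1 B1.C_sub by blast
  have y1'T2: "y1' \<notin> T2" using y1'T1 disj by blast
  interpret M: move_setting V E x T2 y1' by unfold_locales (use xV c2 y1'V y1'T2 in simp_all)
  define q where "q = B1.qq"
  have q2: "B2.qq = q" using assms(11) B1.d_xy0 B2.d_xy0 q_def by simp
  have q1: "q \<ge> 1" using B1.qq1 q_def by simp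
  have p: "dist V E x y1 = Suc q" using B1.d_xy0 q_def by simp
  define t1 where "t1 = card B1.LL"
  define t2 where "t2 = card B2.LL"
  have t1eq: "card {y \<in> T1. leaf V E y} = t1" unfolding t1_def B1.LL_def ..
  have t12: "t1 = t2 + 1" using assms(12) unfolding t1_def t2_def B1.LL_def B2.LL_def .
  define A where "A = V - T2"
  have finV: "finite V" by (rule finV)
  have T2V: "T2 \<subseteq> V" using B2.C_sub by blast
  have T1A: "T1 \<subseteq> A" using B1.C_sub disj unfolding A_def by blast
  have finA: "finite A" using finV unfolding A_def by simp
  have AV: "A \<subseteq> V" unfolding A_def by blast
  define cA where "cA = card A"
  define m1 where "m1 = card T1"
  define m2 where "m2 = card T2"
  have m1q: "m1 = q + t1" using B1.card_C unfolding m1_def t1_def q_def .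
  have m2q: "m2 = q + t2" using B2.card_C q2 unfolding m2_def t2_def by simp
  have nA: "card V = cA + m2" unfolding cA_def m2_def A_def using card_Diff_subset[OF finite_subset[OF T2V finV] T2V]
    card_mono[OF finV T2V] by simp
  have cA1: "card (A - T1) = cA - m1" unfolding cA_def m1_def using card_Diff_subset[OF finite_subset[OF T1A finA] T1A] .
  have m1cA: "m1 \<le> cA" unfolding cA_def m1_def using card_mono[OF finA T1A] .
  have splitV: "(\<Sum>u\<in>V. F u) = (\<Sum>u\<in>A. F u) + (\<Sum>u\<in>T2. F u)" for F :: "'a \<Rightarrow> nat"
    unfolding A_def by (rule sum.subset_diff[OF T2V finV])
  have splitA: "(\<Sum>u\<in>A. F u) = (\<Sum>u\<in>A - T1. F u) + (\<Sum>u\<in>T1. F u)" for F :: "'a \<Rightarrow> nat"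
    by (rule sum.subset_diff[OF T1A finA])
  have cross1: "dist V E u v = dist V E x v + dist V E x u" if "u \<in> A" "v \<in> T2" for u v
  proof -
    have uV: "u \<in> V" "u \<notin> T2" using that unfolding A_def by auto
    have vV: "v \<in> V" using that T2V by blast
    have "dist V E v u = dist V E v x + dist V E x u" by (rule B2.cut_dist[OF that(2) uV])
    then show ?thesis using dist_sym[OF uV(1) vV] dist_sym[OF vV xV] by simp
  qed
  have cross2: "dist V E u v = dist V E x u + dist V E x v" if "u \<in> T2" "v \<in> A" for u v
    using cross1[OF that(2) that(1)] dist_sym that T2V AV by (metis add.commute subsetD)
  define SX where "SX = (\<Sum>v\<in>T2. dist V E x v)"
  define DA where "DA = (\<Sum>u\<in>A. dist V E x u)"
  define AA where "AA = (\<Sum>u\<in>A. \<Sum>v\<in>A. dist V E u v)"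
  define W2 where "W2 = (\<Sum>u\<in>T2. \<Sum>v\<in>T2. dist V E u v)"
  define TT where "TT = (\<Sum>u\<in>V. \<Sum>v\<in>V. dist V E u v)"
  have TTeq: "TT = AA + 2 * (cA * SX + m2 * DA) + W2"
  proof -
    have "TT = (\<Sum>u\<in>V. (\<Sum>v\<in>A. dist V E u v) + (\<Sum>v\<in>T2. dist V E u v))"
      unfolding TT_def by (rule sum.cong[OF refl]) (rule splitV)
    also have "\<dots> = (\<Sum>u\<in>A. (\<Sum>v\<in>A. dist V E u v) + (\<Sum>v\<in>T2. dist V E u v))
       + (\<Sum>u\<in>T2. (\<Sum>v\<in>A. dist V E u v) + (\<Sum>v\<in>T2. dist V E u v))" by (rule splitV)
    also have "\<dots> = AA + (\<Sum>u\<in>A. \<Sum>v\<in>T2. dist V E u v) + (\<Sum>u\<in>T2. \<Sum>v\<in>A. dist V E u v) + W2"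
      unfolding AA_def W2_def by (simp add: sum.distrib)
    also have "(\<Sum>u\<in>A. \<Sum>v\<in>T2. dist V E u v) = cA * SX + m2 * DA"
    proof -
      have "(\<Sum>u\<in>A. \<Sum>v\<in>T2. dist V E u v) = (\<Sum>u\<in>A. SX + m2 * dist V E x u)"
      proof (rule sum.cong[OF refl])
        fix u assume u: "u \<in> A"
        have "(\<Sum>v\<in>T2. dist V E u v) = (\<Sum>v\<in>T2. dist V E x v + dist V E x u)"
          by (rule sum.cong[OF refl]) (rule cross1[OF u])
        then show "(\<Sum>v\<in>T2. dist V E u v) = SX + m2 * dist V E x u"
          unfolding SX_def m2_def by (simp add: sum.distrib)
      qed
      then show ?thesis unfolding DA_def cA_def by (simp add: sum.distrib sum_distrib_left)
    qed
    also have "(\<Sum>u\<in>T2. \<Sum>v\<in>A. dist V E u v) = cA * SX + m2 * DA"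
    proof -
      have "(\<Sum>u\<in>T2. \<Sum>v\<in>A. dist V E u v) = (\<Sum>u\<in>T2. cA * dist V E x u + DA)"
      proof (rule sum.cong[OF refl])
        fix u assume u: "u \<in> T2"
        have "(\<Sum>v\<in>A. dist V E u v) = (\<Sum>v\<in>A. dist V E x u + dist V E x v)"
          by (rule sum.cong[OF refl]) (rule cross2[OF u])
        then show "(\<Sum>v\<in>A. dist V E u v) = cA * dist V E x u + DA"
          unfolding DA_def cA_def by (simp add: sum.distrib)
      qed
      then show ?thesis unfolding SX_def m2_def by (simp add: sum.distrib sum_distrib_left)
    qed
    finally show ?thesis by simp
  qed
  define V' where "V' = move_V V T2"
  define E' where "E' = move_E E T2 y1'"
  have V'eq: "V' = Inl ` A \<union> Inr ` {..<m2}" unfolding V'_def move_V_def A_def m2_def ..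
  define QA where "QA = (\<Sum>b\<in>A. dist V E y1' b)"
  define TT' where "TT' = (\<Sum>u\<in>V'. \<Sum>v\<in>V'. dist V' E' u v)"
  have AVn: "a \<in> V" "a \<notin> T2" if "a \<in> A" for a using that unfolding A_def by auto
  have m2pos: "m2 \<ge> 1" using m2q q1 by simp
  have TT'eq: "TT' = AA + 2 * (m2 * (QA + cA)) + m2 * (2 * (m2 - 1))"
  proof -
    have sV': "(\<Sum>z\<in>V'. F z) = (\<Sum>a\<in>A. F (Inl a)) + (\<Sum>i<m2. F (Inr i))" for F :: "'a + nat \<Rightarrow> nat"
      unfolding V'eq by (rule sum_moveV[OF finA])
    have r1: "(\<Sum>z\<in>V'. dist V' E' (Inl a) z) = (\<Sum>b\<in>A. dist V E a b) + m2 * Suc (dist V E y1' a)"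
      if a: "a \<in> A" for a
    proof -
      have "(\<Sum>b\<in>A. dist V' E' (Inl a) (Inl b)) = (\<Sum>b\<in>A. dist V E a b)"
        by (rule sum.cong[OF refl]) (use M.d'1 AVn a in \<open>simp add: V'_def E'_def\<close>)
      moreover have "(\<Sum>i<m2. dist V' E' (Inl a) (Inr i)) = (\<Sum>i<m2. Suc (dist V E y1' a))"
        by (rule sum.cong[OF refl]) (use M.d'2 AVn a dist_sym y1'V in \<open>simp add: V'_def E'_def m2_def\<close>)
      ultimately show ?thesis using sV' by simp
    qed
    have r2: "(\<Sum>z\<in>V'. dist V' E' (Inr i) z) = (QA + cA) + 2 * (m2 - 1)"
      if i: "i < m2" for i
    proof -
      have "(\<Sum>b\<in>A. dist V' E' (Inr i) (Inl b)) = (\<Sum>b\<in>A. Suc (dist V E y1' b))"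
        by (rule sum.cong[OF refl]) (use M.d'3 AVn i in \<open>simp add: V'_def E'_def m2_def\<close>)
      also have "\<dots> = QA + cA" unfolding QA_def cA_def by (simp add: sum_Suc)
      finally have e1: "(\<Sum>b\<in>A. dist V' E' (Inr i) (Inl b)) = QA + cA" .
      have "(\<Sum>j<m2. dist V' E' (Inr i) (Inr j)) = (\<Sum>j<m2. if i = j then 0 else 2)"
        by (rule sum.cong[OF refl]) (use M.d'4 i in \<open>simp add: V'_def E'_def m2_def\<close>)
      also have "\<dots> = 2 * (m2 - 1)"
      proof -
        have "(\<Sum>j<m2. (if i = j then 0 else 2::nat)) = (\<Sum>j\<in>{..<m2} - {i}. 2)"
        proof -
          have "(\<Sum>j<m2. (if i = j then 0 else 2::nat)) = (if i = i then 0 else 2) + (\<Sum>j\<in>{..<m2} - {i}. if i = j then 0 else 2)"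
            using sum.remove[of "{..<m2}" i "\<lambda>j. if i = j then 0 else 2::nat"] i by simp
          also have "(\<Sum>j\<in>{..<m2} - {i}. if i = j then 0 else 2::nat) = (\<Sum>j\<in>{..<m2} - {i}. 2)"
            by (rule sum.cong) auto
          finally show ?thesis by simp
        qed
        also have "\<dots> = 2 * (m2 - 1)" using i by simp
        finally show ?thesis .
      qed
      finally have e2: "(\<Sum>j<m2. dist V' E' (Inr i) (Inr j)) = 2 * (m2 - 1)" .
      show ?thesis using sV' e1 e2 by simp
    qed
    have "TT' = (\<Sum>a\<in>A. \<Sum>z\<in>V'. dist V' E' (Inl a) z) + (\<Sum>i<m2. \<Sum>z\<in>V'. dist V' E' (Inr i) z)"
      unfolding TT'_def by (rule sV')
    also have "(\<Sum>a\<in>A. \<Sum>z\<in>V'. dist V' E' (Inl a) z) = (\<Sum>a\<in>A. (\<Sum>b\<in>A. dist V E a b) + m2 * Suc (dist V E y1' a))"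
      by (rule sum.cong[OF refl]) (rule r1)
    also have "\<dots> = AA + m2 * (QA + cA)" unfolding AA_def QA_def cA_def
      by (simp add: sum.distrib sum_distrib_left[symmetric] sum_Suc algebra_simps)
    also have "(\<Sum>i<m2. \<Sum>z\<in>V'. dist V' E' (Inr i) z) = (\<Sum>i<m2. (QA + cA) + 2 * (m2 - 1))"
      by (rule sum.cong[OF refl]) (use r2 in simp)
    also have "\<dots> = m2 * (QA + cA) + m2 * (2 * (m2 - 1))" by (simp add: add_mult_distrib2)
    finally show ?thesis by simp
  qed
  define DR where "DR = (\<Sum>b\<in>A - T1. dist V E x b)"
  define SC1 where "SC1 = (\<Sum>w\<in>T1. dist V E x w)"
  define QC1 where "QC1 = (\<Sum>w\<in>T1. dist V E y1' w)"
  have DAeq: "DA = SC1 + DR" unfolding DA_def SC1_def DR_def using splitA by simp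
  have dyx: "dist V E y1' x = q"
  proof -
    have "dist V E x y1' = q" using B1.d_x[of B1.qq] B1.aaq y1'b q_def by simp
    then show ?thesis using dist_sym[OF xV y1'V] by simp
  qed
  have QAeq: "QA = QC1 + (cA - m1) * q + DR"
  proof -
    have "QA = (\<Sum>b\<in>A - T1. dist V E y1' b) + QC1" unfolding QA_def QC1_def by (rule splitA)
    also have "(\<Sum>b\<in>A - T1. dist V E y1' b) = (\<Sum>b\<in>A - T1. q + dist V E x b)"
    proof (rule sum.cong[OF refl])
      fix b assume b: "b \<in> A - T1"
      then have "b \<in> V" "b \<notin> T1" using AV by auto
      then show "dist V E y1' b = q + dist V E x b" using B1.cut_dist[OF y1'T1] dyx by simp
    qed
    also have "\<dots> = (cA - m1) * q + DR" unfolding DR_def using cA1 by (simp add: sum.distrib)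
    finally show ?thesis by simp
  qed
  have evAA: "even AA" unfolding AA_def
    by (rule even_sym[OF finA]) (use dist_sym dist_self AV in auto)
  have finT2: "finite T2" using finite_subset[OF T2V finV] .
  have evW2: "even W2" unfolding W2_def
    by (rule even_sym[OF finT2]) (use dist_sym dist_self T2V in auto)
  have w1: "2 * wiener V E = TT"
  proof -
    have "even TT" using TTeq evAA evW2 by simp
    then show ?thesis unfolding wiener_def TT_def by simp
  qed
  have w2: "2 * wiener (move_V V T2) (move_E E T2 y1') = TT'"
  proof -
    have "even TT'" using TT'eq evAA by simp
    then show ?thesis unfolding wiener_def TT'_def V'_def E'_def by simp
  qed
  define S where "S = (\<Sum>i\<in>{1..q}. i)"
  define R where "R = (\<Sum>i\<in>{1..q}. q - i)"
  define G where "G = (\<Sum>i\<in>{1..q}. \<Sum>j\<in>{1..q}. if i \<le> j then j - i else i - j)"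
  have SXeq: "SX = S + t2 * Suc q" using B2.SC q2 unfolding SX_def S_def t2_def by simp
  have SC1eq: "SC1 = S + t1 * Suc q" using B1.SC unfolding SC1_def S_def t1_def q_def by simp
  have QC1eq: "QC1 = R + t1" using B1.QC y1'b unfolding QC1_def R_def t1_def q_def by simp
  have W2eq: "W2 = G + 2 * (t2 * S) + t2 * (2 * (t2 - 1))"
    using B2.WC q2 cf3[of q] unfolding W2_def G_def S_def t2_def by simp
  have cS: "2 * S = q * Suc q" unfolding S_def by (rule cf1)
  have cR: "R + S = q * q" unfolding R_def S_def by (rule cf2)
  have cG: "3 * real G = (real q - 1) * real q * (real q + 1)"
  proof -
    have "3 * int G = (int q - 1) * int q * (int q + 1)" unfolding G_def using cf4[of q] by simp
    then have "real_of_int (3 * int G) = real_of_int ((int q - 1) * int q * (int q + 1))" by simp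
    then show ?thesis by simp
  qed
  have key: "3 * (real TT - real TT') = real q * (12*(real t1)^2 + 24*real t1*(real q+1) - 36*real t1
     + 10*(real q+1)^2 - 29*(real q+1) + 24 - 3*(real q+1)*real (card V))"
  proof (rule final_arith)
    show "real TT = real AA + 2*(real cA*real SX + real m2*real DA) + real W2" using TTeq by simp
    show "real TT' = real AA + 2*(real m2*(real QA+real cA)) + real m2*(2*(real m2-1))"
      using TT'eq m2pos by (simp add: of_nat_diff)
    show "real QA = real QC1 + (real cA - real m1)*real q + real DR" using QAeq m1cA by (simp add: of_nat_diff)
    show "real DA = real SC1 + real DR" using DAeq by simp
    show "real SX = real S + real t2*(real q+1)" using SXeq by (simp add: algebra_simps)
    show "real SC1 = real S + real t1*(real q+1)" using SC1eq by (simp add: algebra_simps)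
    show "real QC1 = real R + real t1" using QC1eq by simp
    show "real R + real S = real q * real q" using cR by (metis of_nat_add of_nat_mult)
    show "2 * real S = real q * (real q + 1)" using cS by (metis of_nat_Suc of_nat_mult of_nat_numeral add.commute)
    show "3 * real G = (real q - 1) * real q * (real q + 1)" by (rule cG)
    show "real W2 = real G + 2*(real t2*real S) + real t2*(2*(real t2-1))"
      using W2eq by (cases t2) (simp_all add: of_nat_diff algebra_simps)
    show "real m1 = real q + real t1" using m1q by simp
    show "real m2 = real q + real t2" using m2q by simp
    show "real t1 = real t2 + 1" using t12 by simp
    show "real (card V) = real cA + real m2" using nA by simp
  qed
  have "wiener (move_V V T2) (move_E E T2 y1') \<le> wiener V E \<longleftrightarrow> real TT' \<le> real TT" using w1 w2 by linarith
  also have "\<dots> \<longleftrightarrow> 0 \<le> 12*(real t1)^2 + 24*real t1*(real q+1) - 36*real t1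
     + 10*(real q+1)^2 - 29*(real q+1) + 24 - 3*(real q+1)*real (card V)"
  proof -
    have qp: "real q > 0" using q1 by simp
    have "real TT' \<le> real TT \<longleftrightarrow> 0 \<le> 3 * (real TT - real TT')" by (simp add: right_diff_distrib)
    also have "\<dots> \<longleftrightarrow> 0 \<le> real q * (12*(real t1)^2 + 24*real t1*(real q+1) - 36*real t1
     + 10*(real q+1)^2 - 29*(real q+1) + 24 - 3*(real q+1)*real (card V))" unfolding key ..
    also have "\<dots> \<longleftrightarrow> 0 \<le> 12*(real t1)^2 + 24*real t1*(real q+1) - 36*real t1
     + 10*(real q+1)^2 - 29*(real q+1) + 24 - 3*(real q+1)*real (card V)"
      using qp by (simp add: zero_le_mult_iff)
    finally show ?thesis .
  qed
  also have "\<dots> \<longleftrightarrow> real t1 \<ge> sqrt (((real q + 1)*(3*real (card V) + 2*(real q + 1) - 7) + 3)/12) - (real q + 1) + 3/2"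
    by (rule final_sqrt) (use t12 q1 in simp_all)
  finally show ?thesis using t1eq p by (simp add: add.commute)
qed

end
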